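(* Fix $K\ge2$. For $\theta>0$ let $V_1,\dots,V_{K-1}$ be independent with $V_i\sim\mathrm{Beta}(\frac\theta K+1,(K-i)\frac\theta K)$, and set $Y_1^K=V_1$, $Y_i^K=(1-V_1)\cdots(1-V_{i-1})V_i$ for $2\le i\le K-1$. Then, as $\theta\to\infty$, the family of laws of $(Y_1^K,\dots,Y_{K-1}^K)$ satisfies an LDP on $\Delta_{K-1}=\{(y_1,\dots,y_{K-1}):y_i\ge0,\ \sum_i y_i\le1\}$ with speed $\theta$ and rate function $$S^K(y_1,\dots,y_{K-1})=\sum_{i=1}^{K-1}\Big[\frac1K\log\frac{1-\sum_{l=1}^{i-1}y_l}{y_i}+\frac{K-i}{K}\log\frac{1-\sum_{l=1}^{i-1}y_l}{1-\sum_{l=1}^{i}y_l}\Big]+\sum_{i=1}^{K-1}\Big[\frac1K\log\frac1{K+1-i}+\frac{K-i}K\log\frac{K-i}{K+1-i}\Big].$$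
   Context: $(Y_1^K,\dots,Y_{K-1}^K)$ is the size-biased sampling of a symmetric $\mathrm{Dirichlet}(\theta/K,\dots,\theta/K)$ distribution. Empty sums are $0$; logarithms of expressions with zero denominator are interpreted as $+\infty$ (the rate function takes value $+\infty$ there). An LDP with speed $\theta$ uses normalization $\theta^{-1}\log$ as $\theta\to\infty$. *)

theory Defs
  imports "HOL-Probability.Probability"
begin

definition beta_density :: "real \<Rightarrow> real \<Rightarrow> real \<Rightarrow> real" where
  "beta_density a b x =
     indicator {0<..<1} x * x powr (a - 1) * (1 - x) powr (b - 1) / Beta a b"

definition beta_measure :: "real \<Rightarrow> real \<Rightarrow> real measure" where
  "beta_measure a b = density lborel (\<lambda>x. ennreal (beta_density a b x))"

text \<open>Stick-breaking map (0-based indices): Y j = (prod_{l<j} (1 - V l)) * V j, j < K-1.\<close>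
definition stick_break :: "nat \<Rightarrow> (nat \<Rightarrow> real) \<Rightarrow> (nat \<Rightarrow> real)" where
  "stick_break K v = restrict (\<lambda>j. (\<Prod>l<j. 1 - v l) * v j) {..<K-1}"

text \<open>Law of (Y_1^K,...,Y_{K-1}^K) for parameter theta: V_{j+1} ~ Beta(theta/K+1, (K-1-j) theta/K),
  independent (product measure).\<close>
definition law_Y :: "nat \<Rightarrow> real \<Rightarrow> (nat \<Rightarrow> real) measure" where
  "law_Y K \<theta> = distr
     (PiM {..<K-1} (\<lambda>j. beta_measure (\<theta> / real K + 1) (real (K - 1 - j) * \<theta> / real K)))
     (PiM {..<K-1} (\<lambda>_. borel)) (stick_break K)"

definition Delta_simplex :: "nat \<Rightarrow> (nat \<Rightarrow> real) set" where
  "Delta_simplex K = {y. y \<in> extensional {..<K-1} \<and> (\<forall>i<K-1. 0 \<le> y i) \<and> (\<Sum>i<K-1. y i) \<le> 1}"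

definition elog :: "real \<Rightarrow> real \<Rightarrow> ereal" where
  "elog a b = (if b = 0 then \<infinity> else ereal (ln (a / b)))"

definition log_prob :: "real \<Rightarrow> ereal" where
  "log_prob p = (if p = 0 then -\<infinity> else ereal (ln p))"

definition rate_S :: "nat \<Rightarrow> (nat \<Rightarrow> real) \<Rightarrow> ereal" where
  "rate_S K y =
     (\<Sum>i<K-1. ereal (1 / real K) * elog (1 - (\<Sum>l<i. y l)) (y i)
              + ereal (real (K - 1 - i) / real K) * elog (1 - (\<Sum>l<i. y l)) (1 - (\<Sum>l\<le>i. y l)))
   + ereal (\<Sum>i<K-1. 1 / real K * ln (1 / real (K - i))
              + real (K - 1 - i) / real K * ln (real (K - 1 - i) / real (K - i)))"

definition LDP :: "'a::topological_space set \<Rightarrow> (real \<Rightarrow> 'a measure) \<Rightarrow> ('a \<Rightarrow> ereal) \<Rightarrow> bool" where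
  "LDP X P I \<longleftrightarrow>
     (\<forall>x\<in>X. 0 \<le> I x) \<and>
     (\<forall>c. closedin (top_of_set X) {x \<in> X. I x \<le> c}) \<and>
     (\<forall>F. closedin (top_of_set X) F \<longrightarrow>
        Limsup at_top (\<lambda>\<theta>. log_prob (measure (P \<theta>) F) / ereal \<theta>) \<le> - (INF x\<in>F. I x)) \<and>
     (\<forall>G. openin (top_of_set X) G \<longrightarrow>
        - (INF x\<in>G. I x) \<le> Liminf at_top (\<lambda>\<theta>. log_prob (measure (P \<theta>) G) / ereal \<theta>))"

end

theory Submission
  imports Defs
begin
definition cK :: "nat \<Rightarrow> nat \<Rightarrow> real" where
  "cK K i = 1 / real K * ln (1 / real (K - i)) + real (K - 1 - i) / real K * ln (real (K - 1 - i) / real (K - i))"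

definition RK :: "nat \<Rightarrow> nat \<Rightarrow> real \<Rightarrow> real" where
  "RK K i p = 1 / real K * ln (1 / p) + real (K - 1 - i) / real K * ln (1 / (1 - p)) + cK K i"

lemma RK_nonneg:
  assumes "i < K - 1" "0 < p" "p < 1"
  shows "0 \<le> RK K i p"
proof -
  define k where "k = real (K - i)"
  define b where "b = real (K - 1 - i)"
  have bk: "b = k - 1" "b \<ge> 1" "k \<ge> 2" using assms(1) by (auto simp: k_def b_def of_nat_diff)
  have K0: "real K > 0" using assms(1) by auto
  have e: "real K * RK K i p = - ln (k * p) - b * ln (k * (1 - p) / b)"
  proof -
    have h1: "ln (k * (1 - p) / b) = ln k + ln (1 - p) - ln b"
      using assms bk by (simp add: ln_div ln_mult)
    have h2: "ln (k * p) = ln k + ln p" using assms bk by (simp add: ln_mult)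
    have h3: "ln (b / k) = ln b - ln k" using bk by (simp add: ln_div)
    show ?thesis unfolding RK_def cK_def k_def[symmetric] b_def[symmetric] h1 h2 h3
      using K0 assms bk by (simp add: field_simps ln_div)
  qed
  have l1: "ln (k * p) \<le> k * p - 1" using assms bk by (intro ln_le_minus_one) auto
  have l2: "ln (k * (1 - p) / b) \<le> k * (1 - p) / b - 1" using assms bk by (intro ln_le_minus_one) auto
  have "b * ln (k * (1 - p) / b) \<le> b * (k * (1 - p) / b - 1)"
    using l2 bk by (intro mult_left_mono) auto
  also have "\<dots> = k * (1 - p) - b" using bk by (simp add: field_simps)
  finally have "ln (k * p) + b * ln (k * (1 - p) / b) \<le> 0"
    using l1 bk right_diff_distrib[of k 1 p] by linarith
  then have "real K * RK K i p \<ge> 0" using e by linarith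
  then show ?thesis using K0 by (simp add: zero_le_mult_iff)
qed

definition intr :: "nat \<Rightarrow> (nat \<Rightarrow> real) \<Rightarrow> bool" where
  "intr K y \<longleftrightarrow> (\<forall>i<K-1. 0 < y i \<and> 0 < 1 - (\<Sum>l\<le>i. y l))"

lemma sum_le_Suc: "(\<Sum>l\<le>i. (y::nat\<Rightarrow>real) l) = (\<Sum>l<i. y l) + y i"
  using sum.lessThan_Suc[of y i] by (simp add: lessThan_Suc_atMost)

lemma rate_intr:
  assumes "intr K y"
  shows "rate_S K y = ereal (\<Sum>i<K-1. RK K i (y i / (1 - (\<Sum>l<i. y l))))"
proof -
  have T: "ereal (1 / real K) * elog (1 - (\<Sum>l<i. y l)) (y i)
              + ereal (real (K - 1 - i) / real K) * elog (1 - (\<Sum>l<i. y l)) (1 - (\<Sum>l\<le>i. y l))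
         = ereal (RK K i (y i / (1 - (\<Sum>l<i. y l))) - cK K i)" if i: "i < K - 1" for i
  proof -
    define A where "A = 1 - (\<Sum>l<i. y l)"
    have yi: "0 < y i" and D: "0 < A - y i" using assms i unfolding intr_def A_def sum_le_Suc by auto
    have A: "A > 0" using yi D by linarith
    have e1: "1 / (y i / A) = A / y i" by simp
    have e2: "1 / (1 - y i / A) = A / (A - y i)" using A by (simp add: field_simps)
    have e3: "1 - (\<Sum>l\<le>i. y l) = A - y i" by (simp add: A_def sum_le_Suc)
    show ?thesis unfolding A_def[symmetric] RK_def elog_def e3
      using yi D by (simp add: e1 e2)
  qed
  have "rate_S K y = (\<Sum>i<K-1. ereal (1 / real K) * elog (1 - (\<Sum>l<i. y l)) (y i)
              + ereal (real (K - 1 - i) / real K) * elog (1 - (\<Sum>l<i. y l)) (1 - (\<Sum>l\<le>i. y l)))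
        + ereal (\<Sum>i<K-1. cK K i)"
    by (simp only: rate_S_def cK_def)
  also have "\<dots> = (\<Sum>i<K-1. ereal (RK K i (y i / (1 - (\<Sum>l<i. y l))) - cK K i)) + ereal (\<Sum>i<K-1. cK K i)"
    apply (intro arg_cong2[where f="(+)"] sum.cong refl)
    apply (rule T)
    apply simp
    done
  also have "\<dots> = ereal (\<Sum>i<K-1. RK K i (y i / (1 - (\<Sum>l<i. y l))))"
    by (simp add: sum_subtractf)
  finally show ?thesis .
qed

lemma Delta_sum_le:
  assumes "y \<in> Delta_simplex K" "i < K - 1"
  shows "(\<Sum>l\<le>i. y l) \<le> 1"
proof -
  have "(\<Sum>l\<le>i. y l) \<le> (\<Sum>l<K-1. y l)"
    using assms by (intro sum_mono2) (auto simp: Delta_simplex_def)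
  then show ?thesis using assms by (auto simp: Delta_simplex_def)
qed

lemma rate_term_nonneg:
  assumes "y \<in> Delta_simplex K" "i < K - 1"
  shows "0 \<le> ereal (1 / real K) * elog (1 - (\<Sum>l<i. y l)) (y i)
              + ereal (real (K - 1 - i) / real K) * elog (1 - (\<Sum>l<i. y l)) (1 - (\<Sum>l\<le>i. y l))"
proof -
  have yi: "0 \<le> y i" using assms by (auto simp: Delta_simplex_def)
  have s: "(\<Sum>l\<le>i. y l) \<le> 1" by (rule Delta_sum_le[OF assms])
  have e1: "0 \<le> elog (1 - (\<Sum>l<i. y l)) (y i)"
    using yi s unfolding elog_def sum_le_Suc by (auto simp: field_simps)
  have e2: "0 \<le> elog (1 - (\<Sum>l<i. y l)) (1 - (\<Sum>l\<le>i. y l))"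
    using yi s unfolding elog_def sum_le_Suc by (auto simp: field_simps)
  show ?thesis using e1 e2 by (intro add_nonneg_nonneg mult_nonneg_nonneg) auto
qed

lemma intr_p:
  assumes "intr K y" "i < K - 1"
  shows "0 < 1 - (\<Sum>l<i. y l)" "0 < y i / (1 - (\<Sum>l<i. y l))" "y i / (1 - (\<Sum>l<i. y l)) < 1"
proof -
  have yi: "0 < y i" and D: "0 < 1 - (\<Sum>l<i. y l) - y i" using assms unfolding intr_def sum_le_Suc by auto
  then show "0 < 1 - (\<Sum>l<i. y l)" by linarith
  then show "0 < y i / (1 - (\<Sum>l<i. y l))" "y i / (1 - (\<Sum>l<i. y l)) < 1"
    using yi D by (auto simp: field_simps)
qed

lemma ereal_cmult_nonneg: "0 \<le> c \<Longrightarrow> 0 \<le> x \<Longrightarrow> 0 \<le> ereal c * x"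
  by (cases x) auto

lemma nonneg_not_MInf: "0 \<le> (x::ereal) \<Longrightarrow> x \<noteq> -\<infinity>"
  by auto

lemma rate_not_intr:
  assumes y: "y \<in> Delta_simplex K" and ni: "\<not> intr K y"
  shows "rate_S K y = \<infinity>"
proof -
  obtain i where i: "i < K - 1" and c: "\<not> 0 < y i \<or> \<not> 0 < 1 - (\<Sum>l\<le>i. y l)"
    using ni unfolding intr_def by auto
  have K: "real K > 0" "real (K - 1 - i) / real K > 0" using i by auto
  have yi: "0 \<le> y i" using y i by (auto simp: Delta_simplex_def)
  have s: "(\<Sum>l\<le>i. y l) \<le> 1" by (rule Delta_sum_le[OF y i])
  have c': "y i = 0 \<or> 1 - (\<Sum>l\<le>i. y l) = 0" using c yi s by auto
  have e1: "0 \<le> elog (1 - (\<Sum>l<i. y l)) (y i)"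
    using yi s unfolding elog_def sum_le_Suc by (auto simp: field_simps)
  have e2: "0 \<le> elog (1 - (\<Sum>l<i. y l)) (1 - (\<Sum>l\<le>i. y l))"
    using yi s unfolding elog_def sum_le_Suc by (auto simp: field_simps)
  have "ereal (1 / real K) * elog (1 - (\<Sum>l<i. y l)) (y i)
              + ereal (real (K - 1 - i) / real K) * elog (1 - (\<Sum>l<i. y l)) (1 - (\<Sum>l\<le>i. y l)) = \<infinity>"
  proof (cases "y i = 0")
    case True
    then have "ereal (1 / real K) * elog (1 - (\<Sum>l<i. y l)) (y i) = \<infinity>"
      using K by (simp add: elog_def)
    moreover have "ereal (real (K - 1 - i) / real K) * elog (1 - (\<Sum>l<i. y l)) (1 - (\<Sum>l\<le>i. y l)) \<noteq> -\<infinity>"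
    proof -
      have "0 \<le> ereal (real (K - 1 - i) / real K) * elog (1 - (\<Sum>l<i. y l)) (1 - (\<Sum>l\<le>i. y l))"
        by (rule ereal_cmult_nonneg[OF less_imp_le[OF K(2)] e2])
      then show ?thesis by (rule nonneg_not_MInf)
    qed
    ultimately show ?thesis by simp
  next
    case False
    then have "1 - (\<Sum>l\<le>i. y l) = 0" using c' by auto
    then have "ereal (real (K - 1 - i) / real K) * elog (1 - (\<Sum>l<i. y l)) (1 - (\<Sum>l\<le>i. y l)) = \<infinity>"
      using K i by (simp add: elog_def of_nat_diff)
    moreover have "ereal (1 / real K) * elog (1 - (\<Sum>l<i. y l)) (y i) \<noteq> -\<infinity>"
    proof -
      have "0 \<le> ereal (1 / real K) * elog (1 - (\<Sum>l<i. y l)) (y i)"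
        using e1 K by (intro ereal_cmult_nonneg) auto
      then show ?thesis by (rule nonneg_not_MInf)
    qed
    ultimately show ?thesis by simp
  qed
  then have "(\<Sum>i<K-1. ereal (1 / real K) * elog (1 - (\<Sum>l<i. y l)) (y i)
              + ereal (real (K - 1 - i) / real K) * elog (1 - (\<Sum>l<i. y l)) (1 - (\<Sum>l\<le>i. y l))) = \<infinity>"
    using i by (subst sum_Pinfty) auto
  then show ?thesis unfolding rate_S_def by simp
qed

lemma rate_nonneg:
  assumes y: "y \<in> Delta_simplex K"
  shows "0 \<le> rate_S K y"
proof (cases "intr K y")
  case True
  show ?thesis unfolding rate_intr[OF True]
    using intr_p[OF True] by (auto intro!: sum_nonneg RK_nonneg)
qed (simp add: rate_not_intr[OF y])

lemma tele: "1 - (\<Sum>l<(j::nat). (\<Prod>m<l. 1 - v m) * v l) = (\<Prod>l<j. 1 - (v l :: real))"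
  by (induction j) (simp_all add: algebra_simps)

lemma stick_sum:
  assumes "j \<le> K - 1"
  shows "(\<Sum>l<j. stick_break K v l) = (\<Sum>l<j. (\<Prod>m<l. 1 - v m) * v l)"
  using assms by (intro sum.cong) (auto simp: stick_break_def)

lemma stick_props:
  assumes v: "\<And>i. i < K - 1 \<Longrightarrow> 0 < v i \<and> v i < 1"
  shows "stick_break K v \<in> Delta_simplex K" "intr K (stick_break K v)"
    "rate_S K (stick_break K v) = ereal (\<Sum>i<K-1. RK K i (v i))"
proof -
  let ?y = "stick_break K v"
  have P: "0 < (\<Prod>l<j. 1 - v l)" if "j \<le> K - 1" for j
    using that v by (intro prod_pos) auto
  have A: "1 - (\<Sum>l<j. ?y l) = (\<Prod>l<j. 1 - v l)" if "j \<le> K - 1" for j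
    using that by (simp add: stick_sum tele)
  have yv: "?y i = (\<Prod>l<i. 1 - v l) * v i" if "i < K - 1" for i
    using that by (simp add: stick_break_def)
  have ypos: "0 < ?y i" if "i < K - 1" for i
    using that P[of i] v[of i] yv[of i] by auto
  show X: "?y \<in> Delta_simplex K"
    unfolding Delta_simplex_def using ypos A[of "K-1"] P[of "K-1"]
    by (auto simp: stick_break_def less_imp_le)
  show I: "intr K ?y"
    unfolding intr_def
  proof (intro allI impI conjI)
    fix i assume i: "i < K - 1"
    show "0 < ?y i" using ypos i by auto
    have "1 - (\<Sum>l\<le>i. ?y l) = 1 - (\<Sum>l<Suc i. ?y l)" by (simp add: lessThan_Suc_atMost)
    also have "\<dots> = (\<Prod>l<Suc i. 1 - v l)" using i by (intro A) auto
    finally show "0 < 1 - (\<Sum>l\<le>i. ?y l)" using P[of "Suc i"] i by auto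
  qed
  have "?y i / (1 - (\<Sum>l<i. ?y l)) = v i" if "i < K - 1" for i
  proof -
    have "?y i / (1 - (\<Sum>l<i. ?y l)) = ((\<Prod>l<i. 1 - v l) * v i) / (\<Prod>l<i. 1 - v l)"
      using that by (simp only: A yv less_imp_le)
    also have "\<dots> = v i"
    proof -
      have pp: "(\<Prod>l<i. 1 - v l) \<noteq> 0" using P[of i] that by linarith
      show ?thesis by (rule nonzero_mult_div_cancel_left[OF pp])
    qed
    finally show ?thesis .
  qed
  then show "rate_S K ?y = ereal (\<Sum>i<K-1. RK K i (v i))"
    unfolding rate_intr[OF I] by (auto intro!: sum.cong)
qed

lemma stick_inverse:
  assumes y: "y \<in> Delta_simplex K" and I: "intr K y"
  defines "v \<equiv> restrict (\<lambda>i. y i / (1 - (\<Sum>l<i. y l))) {..<K-1}"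
  shows "\<And>i. i < K - 1 \<Longrightarrow> 0 < v i \<and> v i < 1" "stick_break K v = y"
proof -
  show vi: "0 < v i \<and> v i < 1" if "i < K - 1" for i
    using intr_p[OF I that] that by (simp add: v_def)
  have P: "(\<Prod>l<j. 1 - v l) = 1 - (\<Sum>l<j. y l)" if "j \<le> K - 1" for j
    using that
  proof (induction j)
    case (Suc j)
    then have j: "j < K - 1" by auto
    have "(\<Prod>l<Suc j. 1 - v l) = (1 - (\<Sum>l<j. y l)) * (1 - v j)" using Suc by simp
    also have "\<dots> = 1 - (\<Sum>l<Suc j. y l)"
      using intr_p(1)[OF I j] j by (simp add: v_def field_simps)
    finally show ?case .
  qed simp
  show "stick_break K v = y"
  proof
    fix j
    show "stick_break K v j = y j"
    proof (cases "j < K - 1")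
      case True
      then show ?thesis using P[of j] intr_p(1)[OF I True] by (simp add: stick_break_def v_def)
    next
      case False
      then show ?thesis using y by (auto simp: stick_break_def Delta_simplex_def extensional_def)
    qed
  qed
qed

lemma elog_nonneg_X:
  assumes "y \<in> Delta_simplex K" "i < K - 1"
  shows "0 \<le> elog (1 - (\<Sum>l<i. y l)) (y i)" "0 \<le> elog (1 - (\<Sum>l<i. y l)) (1 - (\<Sum>l\<le>i. y l))"
proof -
  have yi: "0 \<le> y i" using assms by (auto simp: Delta_simplex_def)
  have s: "(\<Sum>l\<le>i. y l) \<le> 1" by (rule Delta_sum_le[OF assms])
  show "0 \<le> elog (1 - (\<Sum>l<i. y l)) (y i)"
    using yi s unfolding elog_def sum_le_Suc by (auto simp: field_simps)
  show "0 \<le> elog (1 - (\<Sum>l<i. y l)) (1 - (\<Sum>l\<le>i. y l))"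
    using yi s unfolding elog_def sum_le_Suc by (auto simp: field_simps)
qed

definition Tm :: "nat \<Rightarrow> (nat \<Rightarrow> real) \<Rightarrow> nat \<Rightarrow> ereal" where
  "Tm K y i = ereal (1 / real K) * elog (1 - (\<Sum>l<i. y l)) (y i)
              + ereal (real (K - 1 - i) / real K) * elog (1 - (\<Sum>l<i. y l)) (1 - (\<Sum>l\<le>i. y l))"

definition Cst :: "nat \<Rightarrow> real" where
  "Cst K = (\<Sum>i<K-1. 1 / real K * ln (1 / real (K - i))
              + real (K - 1 - i) / real K * ln (real (K - 1 - i) / real (K - i)))"

lemma rate_Tm: "rate_S K y = (\<Sum>i<K-1. Tm K y i) + ereal (Cst K)"
  unfolding rate_S_def Tm_def Cst_def by simp

lemma ereal_drop2: "a + b + c \<le> (r::ereal) \<Longrightarrow> 0 \<le> b \<Longrightarrow> a + c \<le> r"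
  by (metis add.commute add.left_commute add_increasing2 order_refl order_trans)

lemma ereal_drop1: "a + b + c \<le> (r::ereal) \<Longrightarrow> 0 \<le> a \<Longrightarrow> b + c \<le> r"
  by (metis add.commute add.left_commute add_increasing2 order_refl order_trans)

lemma rate_ge_term:
  assumes y: "y \<in> Delta_simplex K" and j: "j < K - 1"
  shows "ereal (1 / real K) * elog (1 - (\<Sum>l<j. y l)) (y j) + ereal (Cst K) \<le> rate_S K y"
    "ereal (real (K - 1 - j) / real K) * elog (1 - (\<Sum>l<j. y l)) (1 - (\<Sum>l\<le>j. y l)) + ereal (Cst K) \<le> rate_S K y"
proof -
  have Tn: "0 \<le> Tm K y i" if "i < K - 1" for i
    unfolding Tm_def using rate_term_nonneg[OF y that] .
  have "Tm K y j \<le> (\<Sum>i<K-1. Tm K y i)"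
    using j Tn by (metis (no_types, lifting) add_increasing2 order_refl sum.remove sum_nonneg Diff_iff
       finite_lessThan lessThan_iff)
  then have T: "Tm K y j + ereal (Cst K) \<le> rate_S K y" unfolding rate_Tm by (intro add_right_mono)
  have p1: "0 \<le> ereal (1 / real K) * elog (1 - (\<Sum>l<j. y l)) (y j)"
    using elog_nonneg_X(1)[OF y j] by (intro ereal_cmult_nonneg) auto
  have p2: "0 \<le> ereal (real (K - 1 - j) / real K) * elog (1 - (\<Sum>l<j. y l)) (1 - (\<Sum>l\<le>j. y l))"
    using elog_nonneg_X(2)[OF y j] by (intro ereal_cmult_nonneg) auto
  show "ereal (1 / real K) * elog (1 - (\<Sum>l<j. y l)) (y j) + ereal (Cst K) \<le> rate_S K y"
    using T p2 unfolding Tm_def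
    by (rule ereal_drop2)
  show "ereal (real (K - 1 - j) / real K) * elog (1 - (\<Sum>l<j. y l)) (1 - (\<Sum>l\<le>j. y l)) + ereal (Cst K) \<le> rate_S K y"
    using T p1 unfolding Tm_def
    by (rule ereal_drop1)
qed

lemma big_elog:
  assumes c: "c > 0" and a0: "a0 > 0" and A: "(A \<longlongrightarrow> a0) F" and B: "(B \<longlongrightarrow> 0) F"
    and Bn: "eventually (\<lambda>z. 0 \<le> B z) F"
  shows "eventually (\<lambda>z. ereal M < ereal c * elog (A z) (B z)) F"
proof -
  define \<delta> where "\<delta> = a0 / 2 * exp (- M / c)"
  have d: "\<delta> > 0" using a0 by (simp add: \<delta>_def)
  have eA: "eventually (\<lambda>z. a0 / 2 < A z) F" using A a0 by (intro order_tendstoD) auto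
  have eB: "eventually (\<lambda>z. B z < \<delta>) F" using B d by (intro order_tendstoD) auto
  show ?thesis using eA eB Bn
  proof eventually_elim
    case (elim z)
    show ?case
    proof (cases "B z = 0")
      case True then show ?thesis using c by (simp add: elog_def)
    next
      case False
      then have Bp: "0 < B z" using elim by auto
      have "ln (a0 / 2 / \<delta>) = M / c" using a0 c by (simp add: \<delta>_def ln_div ln_mult)
      moreover have "ln (a0 / 2 / \<delta>) < ln (A z / B z)"
        using elim Bp d a0 by (intro ln_less_cancel_iff[THEN iffD2] frac_less2) auto
      ultimately have "M / c < ln (A z / B z)" by simp
      then have "M < c * ln (A z / B z)" using c by (simp add: field_simps)
      then show ?thesis using False by (simp add: elog_def)
    qed
  qed
qed

lemma coord_tendsto: "((\<lambda>z::nat\<Rightarrow>real. z i) \<longlongrightarrow> y i) (nhds y)"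
proof -
  have "continuous_on UNIV (\<lambda>z::nat\<Rightarrow>real. z i)" by simp
  then have "((\<lambda>z::nat\<Rightarrow>real. z i) \<longlongrightarrow> y i) (at y)"
    by (simp add: continuous_on_def)
  then show ?thesis using tendsto_at_iff_tendsto_nhds[of "\<lambda>z::nat\<Rightarrow>real. z i" y] by simp
qed

lemma psum_tendsto: "((\<lambda>z::nat\<Rightarrow>real. \<Sum>l\<in>A. z l) \<longlongrightarrow> (\<Sum>l\<in>A. y l)) (nhds y)"
  by (intro tendsto_sum coord_tendsto)

lemma open_eventually: "(\<And>y. y \<in> S \<Longrightarrow> eventually (\<lambda>z. z \<in> S) (nhds y)) \<Longrightarrow> open S"
  by (metis eventually_nhds open_subopen subsetI)

lemma closed_X: "closed (Delta_simplex K)"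
proof -
  have c1: "closed {y::nat\<Rightarrow>real. if i < K - 1 then 0 \<le> y i else y i = undefined}" for i
    by (cases "i < K - 1") (auto intro!: closed_Collect_le closed_Collect_eq continuous_intros)
  have c2: "closed {y::nat\<Rightarrow>real. (\<Sum>i<K-1. y i) \<le> 1}"
    by (intro closed_Collect_le continuous_intros) auto
  have e: "Delta_simplex K = (\<Inter>i. {y. if i < K - 1 then 0 \<le> y i else y i = undefined}) \<inter> {y. (\<Sum>i<K-1. y i) \<le> 1}"
    unfolding Delta_simplex_def extensional_def by auto
  show ?thesis unfolding e using c1 c2 by (intro closed_Int closed_INT) auto
qed

lemma A_pos:
  assumes y: "y \<in> Delta_simplex K" and i: "i < K - 1"
    and nz: "\<And>l. l < i \<Longrightarrow> 1 - (\<Sum>m\<le>l. y m) \<noteq> 0"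
  shows "0 < 1 - (\<Sum>l<i. y l)"
proof (cases i)
  case 0 then show ?thesis by simp
next
  case (Suc m)
  have "(\<Sum>l<i. y l) = (\<Sum>l\<le>m. y l)" using Suc by (simp add: lessThan_Suc_atMost)
  moreover have "(\<Sum>l\<le>m. y l) \<le> 1" using Suc i by (intro Delta_sum_le[OF y]) auto
  moreover have "1 - (\<Sum>l\<le>m. y l) \<noteq> 0" using Suc nz by auto
  ultimately show ?thesis by linarith
qed

lemma ereal_shift: "ereal (r - C) < t \<Longrightarrow> t + ereal C \<le> u \<Longrightarrow> ereal r < u"
  by (cases t; cases u) auto

lemma lsc_rate:
  assumes y: "y \<in> Delta_simplex K" and r: "ereal r < rate_S K y"
  shows "eventually (\<lambda>z. z \<in> Delta_simplex K \<longrightarrow> ereal r < rate_S K z) (nhds y)"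
proof (cases "intr K y")
  case True
  define J where "J z = (\<Sum>i<K-1. RK K i (z i / (1 - (\<Sum>l<i. z l))))" for z :: "nat \<Rightarrow> real"
  have Jy: "rate_S K y = ereal (J y)" unfolding J_def by (rule rate_intr[OF True])
  have "(J \<longlongrightarrow> J y) (nhds y)"
    unfolding J_def RK_def
  proof (intro tendsto_sum tendsto_add tendsto_mult tendsto_const tendsto_ln tendsto_divide
      tendsto_diff coord_tendsto psum_tendsto)
    fix i assume "i \<in> {..<K-1}"
    then have i: "i < K - 1" by simp
    note p = intr_p[OF True i]
    have yi: "0 < y i" using True i by (auto simp: intr_def)
    show "1 - (\<Sum>l<i. y l) \<noteq> 0" using p by simp
    show "y i / (1 - (\<Sum>l<i. y l)) \<noteq> 0" using p(2) by (metis order_less_irrefl)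
    show "1 / (y i / (1 - (\<Sum>l<i. y l))) \<noteq> 0" using p yi by simp
    show "1 - y i / (1 - (\<Sum>l<i. y l)) \<noteq> 0" using p by simp
    show "1 / (1 - y i / (1 - (\<Sum>l<i. y l))) \<noteq> 0" using p by simp
  qed (use intr_p(1)[OF True] in fastforce)
  then have e1: "eventually (\<lambda>z. r < J z) (nhds y)"
    using r Jy by (intro order_tendstoD(1)) auto
  have e2: "eventually (\<lambda>z. intr K z) (nhds y)"
  proof -
    have "eventually (\<lambda>z. \<forall>i\<in>{..<K-1}. 0 < z i \<and> 0 < 1 - (\<Sum>l\<le>i. z l)) (nhds y)"
    proof (rule eventually_ball_finite)
      show "\<forall>i\<in>{..<K-1}. eventually (\<lambda>z. 0 < z i \<and> 0 < 1 - (\<Sum>l\<le>i. z l)) (nhds y)"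
      proof
        fix i assume "i \<in> {..<K-1}"
        then have yi: "0 < y i" "0 < 1 - (\<Sum>l\<le>i. y l)" using True by (auto simp: intr_def)
        have a: "eventually (\<lambda>z. 0 < z i) (nhds y)"
          using yi by (intro order_tendstoD(1)[OF coord_tendsto])
        have b: "eventually (\<lambda>z. 0 < 1 - (\<Sum>l\<le>i. z l)) (nhds y)"
          using yi by (intro order_tendstoD(1)[OF tendsto_diff[OF tendsto_const psum_tendsto]])
        show "eventually (\<lambda>z. 0 < z i \<and> 0 < 1 - (\<Sum>l\<le>i. z l)) (nhds y)"
          using a b by eventually_elim auto
      qed
    qed simp
    then show ?thesis by eventually_elim (auto simp: intr_def)
  qed
  show ?thesis using e1 e2
  proof eventually_elim
    case (elim z)
    then show ?case unfolding J_def by (simp add: rate_intr)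
  qed
next
  case False
  let ?F = "inf (nhds y) (principal (Delta_simplex K))"
  have Xev: "eventually (\<lambda>z. z \<in> Delta_simplex K) ?F"
    by (simp add: eventually_inf_principal)
  have tF: "((\<lambda>z::nat\<Rightarrow>real. \<Sum>l\<in>A. z l) \<longlongrightarrow> (\<Sum>l\<in>A. y l)) ?F" for A
    by (rule tendsto_mono[OF inf_le1 psum_tendsto])
  have tF1: "((\<lambda>z::nat\<Rightarrow>real. 1 - (\<Sum>l\<in>A. z l)) \<longlongrightarrow> 1 - (\<Sum>l\<in>A. y l)) ?F" for A
    by (intro tendsto_diff tendsto_const tF)
  have "eventually (\<lambda>z. ereal r < rate_S K z) ?F"
  proof (cases "\<exists>j<K-1. 1 - (\<Sum>l\<le>j. y l) = 0")
    case True
    define j where "j = (LEAST j. j < K - 1 \<and> 1 - (\<Sum>l\<le>j. y l) = 0)"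
    have j: "j < K - 1" "1 - (\<Sum>l\<le>j. y l) = 0"
      using LeastI_ex[OF True] unfolding j_def by auto
    have least: "1 - (\<Sum>m\<le>l. y m) \<noteq> 0" if "l < j" for l
    proof -
      have "\<not> (l < K - 1 \<and> 1 - (\<Sum>m\<le>l. y m) = 0)"
        using not_less_Least[of l "\<lambda>j. j < K - 1 \<and> 1 - (\<Sum>l\<le>j. y l) = 0"] that
        unfolding j_def by blast
      then show ?thesis using that j(1) by auto
    qed
    have Ap: "0 < 1 - (\<Sum>l<j. y l)" using A_pos[OF y j(1) least] .
    have c: "0 < real (K - 1 - j) / real K" using j by auto
    have Bn: "eventually (\<lambda>z. 0 \<le> 1 - (\<Sum>l\<le>j. z l)) ?F"
      using Xev by eventually_elim (use Delta_sum_le j in auto)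
    have ev: "eventually (\<lambda>z. ereal (r - Cst K) < ereal (real (K - 1 - j) / real K) * elog (1 - (\<Sum>l<j. z l)) (1 - (\<Sum>l\<le>j. z l))) ?F"
      using big_elog[OF c Ap tF1 _ Bn] tF1[of "{..j}"] j(2) by simp
    show ?thesis using ev Xev
      by eventually_elim (use rate_ge_term(2) j in \<open>auto intro: ereal_shift\<close>)
  next
    case nz: False
    obtain i where i: "i < K - 1" and c: "\<not> 0 < y i \<or> \<not> 0 < 1 - (\<Sum>l\<le>i. y l)"
      using False unfolding intr_def by auto
    have yi0: "y i = 0"
    proof -
      have "0 \<le> y i" using y i by (auto simp: Delta_simplex_def)
      moreover have "(\<Sum>l\<le>i. y l) \<le> 1" by (rule Delta_sum_le[OF y i])
      moreover have "1 - (\<Sum>l\<le>i. y l) \<noteq> 0" using nz i by auto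
      ultimately show ?thesis using c by linarith
    qed
    have Ap: "0 < 1 - (\<Sum>l<i. y l)" using A_pos[OF y i] nz i by auto
    have c: "0 < 1 / real K" using i by auto
    have Bn: "eventually (\<lambda>z. 0 \<le> z i) ?F"
      using Xev by eventually_elim (use i in \<open>auto simp: Delta_simplex_def\<close>)
    have tB: "((\<lambda>z. z i) \<longlongrightarrow> 0) ?F"
      using tendsto_mono[OF inf_le1 coord_tendsto[of i y]] yi0 by simp
    have ev: "eventually (\<lambda>z. ereal (r - Cst K) < ereal (1 / real K) * elog (1 - (\<Sum>l<i. z l)) (z i)) ?F"
      by (rule big_elog[OF c Ap tF1 tB Bn])
    show ?thesis using ev Xev
      by eventually_elim (use rate_ge_term(1) i in \<open>auto intro: ereal_shift\<close>)
  qed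
  then show ?thesis by (simp add: eventually_inf_principal)
qed

lemma bd_meas[measurable]: "beta_density a b \<in> borel_measurable borel"
  unfolding beta_density_def by measurable

lemma sets_beta[simp]: "sets (beta_measure a b) = sets borel"
  by (simp add: beta_measure_def)

lemma space_beta[simp]: "space (beta_measure a b) = UNIV"
  by (simp add: beta_measure_def)

lemma Beta_pos: "0 < (a::real) \<Longrightarrow> 0 < b \<Longrightarrow> 0 < Beta a b"
  by (simp add: Beta_def Gamma_real_pos)

lemma Beta_int:
  assumes "0 < a" "0 < b"
  shows "(\<integral>\<^sup>+ x. ennreal (indicator {0<..<1} x * (x powr (a - 1) * (1 - x) powr (b - 1))) \<partial>lborel) = ennreal (Beta a b)"
proof -
  have "((\<lambda>t. t powr (a - 1) * (1 - t) powr (b - 1)) has_integral Beta a b) {0<..<1}"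
    using has_integral_Beta_real[OF assms] by (simp add: has_integral_Icc_iff_Ioo)
  then show ?thesis by (intro nn_integral_has_integral_lebesgue) auto
qed

lemma beta_density_alt:
  "beta_density a b x = indicator {0<..<1} x * (x powr (a - 1) * (1 - x) powr (b - 1)) / Beta a b"
  unfolding beta_density_def by simp

lemma beta_prob:
  assumes "0 < a" "0 < b"
  shows "prob_space (beta_measure a b)"
proof
  have B: "0 < Beta a b" by (rule Beta_pos[OF assms])
  have "emeasure (beta_measure a b) (space (beta_measure a b))
      = (\<integral>\<^sup>+ x. ennreal (beta_density a b x) \<partial>lborel)"
    unfolding beta_measure_def by (subst emeasure_density) auto
  also have "\<dots> = (\<integral>\<^sup>+ x. ennreal (indicator {0<..<1} x * (x powr (a - 1) * (1 - x) powr (b - 1))) * ennreal (1 / Beta a b) \<partial>lborel)"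
    using B by (intro nn_integral_cong) (auto simp: beta_density_alt ennreal_mult'[symmetric] indicator_def)
  also have "\<dots> = ennreal (Beta a b) * ennreal (1 / Beta a b)"
    by (subst nn_integral_multc) (auto simp: Beta_int[OF assms])
  also have "\<dots> = 1" using B by (simp add: ennreal_mult'[symmetric])
  finally show "emeasure (beta_measure a b) (space (beta_measure a b)) = 1" .
qed

lemma RK_alt:
  assumes "0 < x" "x < 1"
  shows "RK K i x - cK K i = - (1 / real K) * ln x - real (K - 1 - i) / real K * ln (1 - x)"
  using assms unfolding RK_def by (simp add: ln_div)

lemma phi_lower:
  assumes x: "0 < x" "x < 1" and th: "0 \<le> \<theta>"
  shows "exp (- \<theta> * (RK K i x - cK K i)) \<le> x powr (\<theta> / real K) * (1 - x) powr (real (K - 1 - i) * \<theta> / real K - 1)"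
proof -
  have l2: "ln (1 - x) < 0" using x by simp
  have "x powr (\<theta> / real K) * (1 - x) powr (real (K - 1 - i) * \<theta> / real K - 1)
      = exp (\<theta> / real K * ln x + (real (K - 1 - i) * \<theta> / real K - 1) * ln (1 - x))"
    using x by (simp add: powr_def exp_add)
  moreover have "- \<theta> * (RK K i x - cK K i) \<le> \<theta> / real K * ln x + (real (K - 1 - i) * \<theta> / real K - 1) * ln (1 - x)"
    unfolding RK_alt[OF x] using l2 by (simp add: algebra_simps)
  ultimately show ?thesis by simp
qed

lemma phi_upper:
  assumes x: "0 < x" "x < 1" and i: "i < K - 1"
  shows "x powr (\<theta> / real K) * (1 - x) powr (real (K - 1 - i) * \<theta> / real K - 1) * exp ((\<theta> - real K) * (RK K i x - cK K i)) \<le> 1"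
proof -
  have l1: "ln x < 0" and l2: "ln (1 - x) < 0" using x by auto
  have K: "real K > 0" using i by auto
  have b: "real (K - 1 - i) \<ge> 1" using i by auto
  have "x powr (\<theta> / real K) * (1 - x) powr (real (K - 1 - i) * \<theta> / real K - 1) * exp ((\<theta> - real K) * (RK K i x - cK K i))
      = exp (\<theta> / real K * ln x + (real (K - 1 - i) * \<theta> / real K - 1) * ln (1 - x) + (\<theta> - real K) * (RK K i x - cK K i))"
    using x by (simp add: powr_def exp_add)
  also have "\<theta> / real K * ln x + (real (K - 1 - i) * \<theta> / real K - 1) * ln (1 - x) + (\<theta> - real K) * (RK K i x - cK K i)
      = ln x + (real (K - 1 - i) - 1) * ln (1 - x)"
    unfolding RK_alt[OF x] using K by (simp add: field_simps)
  also have "\<dots> \<le> 0" using l1 l2 b by (smt (verit) mult_nonneg_nonpos)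
  finally show ?thesis by simp
qed

lemma mult_exp_le1: "P * exp e \<le> 1 \<Longrightarrow> P \<le> exp (- (e::real))"
proof -
  assume h: "P * exp e \<le> 1"
  have "P = (P * exp e) * exp (- e)" by (simp add: exp_minus)
  also have "\<dots> \<le> 1 * exp (- e)" using h by (intro mult_right_mono) auto
  finally show ?thesis by simp
qed

lemma int_const_ind:
  "(\<integral>\<^sup>+ x. ennreal (indicator {l..u} x * C) \<partial>lborel) = ennreal C * emeasure lborel {l..u}" if "0 \<le> C" for l u :: real
proof -
  have "(\<integral>\<^sup>+ x. ennreal (indicator {l..u} x * C) \<partial>lborel) = (\<integral>\<^sup>+ x. ennreal C * indicator {l..u} x \<partial>lborel)"
    by (intro nn_integral_cong) (auto simp: indicator_def)
  also have "\<dots> = ennreal C * emeasure lborel {l..u}" by (rule nn_integral_cmult_indicator) auto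
  finally show ?thesis .
qed

lemma int_const_ind':
  "(\<integral>\<^sup>+ x. ennreal (indicator {l<..<u} x * C) \<partial>lborel) = ennreal C * emeasure lborel {l<..<u}" if "0 \<le> C" for l u :: real
proof -
  have "(\<integral>\<^sup>+ x. ennreal (indicator {l<..<u} x * C) \<partial>lborel) = (\<integral>\<^sup>+ x. ennreal C * indicator {l<..<u} x \<partial>lborel)"
    by (intro nn_integral_cong) (auto simp: indicator_def)
  also have "\<dots> = ennreal C * emeasure lborel {l<..<u}" by (rule nn_integral_cmult_indicator) auto
  finally show ?thesis .
qed

lemma Beta_upper:
  assumes i: "i < K - 1" and th: "real K \<le> \<theta>"
  shows "Beta (\<theta> / real K + 1) (real (K - 1 - i) * \<theta> / real K) \<le> exp ((\<theta> - real K) * cK K i)"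
proof -
  have K: "real K > 0" using i by auto
  have tp: "\<theta> > 0" using K th by linarith
  have bp: "0 < real (K - 1 - i) * \<theta> / real K" using i tp by auto
  have ap: "0 < \<theta> / real K + 1" using tp K by (intro add_pos_pos divide_pos_pos) auto
  have pw: "x powr (\<theta> / real K) * (1 - x) powr (real (K - 1 - i) * \<theta> / real K - 1) \<le> exp ((\<theta> - real K) * cK K i)"
    if x: "0 < x" "x < 1" for x
  proof -
    let ?phi = "x powr (\<theta> / real K) * (1 - x) powr (real (K - 1 - i) * \<theta> / real K - 1)"
    have "?phi * exp ((\<theta> - real K) * (RK K i x - cK K i)) \<le> 1" by (rule phi_upper[OF x i])
    then have "?phi \<le> exp (- ((\<theta> - real K) * (RK K i x - cK K i)))"
      by (rule mult_exp_le1)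
    also have "\<dots> \<le> exp ((\<theta> - real K) * cK K i)"
      using mult_nonneg_nonneg[of "\<theta> - real K" "RK K i x"] RK_nonneg[OF i x] th by (simp add: algebra_simps)
    finally show ?thesis .
  qed
  have "ennreal (Beta (\<theta> / real K + 1) (real (K - 1 - i) * \<theta> / real K))
     = (\<integral>\<^sup>+ x. ennreal (indicator {0<..<1} x * (x powr (\<theta> / real K + 1 - 1) * (1 - x) powr (real (K - 1 - i) * \<theta> / real K - 1))) \<partial>lborel)"
    by (rule Beta_int[OF ap bp, symmetric])
  also have "\<dots> \<le> (\<integral>\<^sup>+ x. ennreal (indicator {0<..<1::real} x * exp ((\<theta> - real K) * cK K i)) \<partial>lborel)"
    apply (rule nn_integral_mono)
    apply (rule ennreal_leI)
    using pw by (auto simp: indicator_def)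
  also have "\<dots> = ennreal (exp ((\<theta> - real K) * cK K i))"
    by (subst int_const_ind') auto
  finally show ?thesis by (subst (asm) ennreal_le_iff) auto
qed

lemma RK_p0:
  assumes i: "i < K - 1"
  shows "RK K i (1 / real (K - i)) = 0"
proof -
  define k where "k = real (K - i)"
  have k: "k \<ge> 2" "real (K - 1 - i) = k - 1" using i by (auto simp: k_def of_nat_diff)
  have e: "1 - 1 / k = (k - 1) / k" using k by (simp add: field_simps)
  show ?thesis unfolding RK_def cK_def k_def[symmetric] k(2) e
    using k by (simp add: ln_div field_simps)
qed

lemma RK_tendsto:
  assumes "0 < p" "p < 1"
  shows "(RK K i \<longlongrightarrow> RK K i p) (nhds p)"
proof -
  have "((\<lambda>x. RK K i x) \<longlongrightarrow> RK K i p) (nhds p)"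
    unfolding RK_def using assms
    by (intro tendsto_intros) (auto intro: filterlim_ident)
  then show ?thesis by simp
qed

lemma Beta_lower:
  assumes i: "i < K - 1" and e: "0 < \<epsilon>"
  shows "eventually (\<lambda>\<theta>. \<theta> * (cK K i - \<epsilon>) \<le> ln (Beta (\<theta> / real K + 1) (real (K - 1 - i) * \<theta> / real K))) at_top"
proof -
  define p0 where "p0 = 1 / real (K - i)"
  have K: "real K > 0" using i by auto
  have p0: "0 < p0" "p0 < 1" using i by (auto simp: p0_def)
  have "eventually (\<lambda>x. 0 < x \<and> x < 1 \<and> RK K i x < \<epsilon> / 2) (nhds p0)"
  proof -
    have a: "eventually (\<lambda>x. 0 < x) (nhds p0)" using p0 by (intro order_tendstoD[OF filterlim_ident]) auto
    have b: "eventually (\<lambda>x. x < 1) (nhds p0)" using p0 by (intro order_tendstoD[OF filterlim_ident]) auto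
    have c: "eventually (\<lambda>x. RK K i x < \<epsilon> / 2) (nhds p0)"
      using RK_p0[OF i] e by (intro order_tendstoD[OF RK_tendsto[OF p0]]) (auto simp: p0_def)
    show ?thesis using a b c by eventually_elim auto
  qed
  then obtain d where d: "d > 0" and dP: "\<And>x. dist x p0 < d \<Longrightarrow> 0 < x \<and> x < 1 \<and> RK K i x < \<epsilon> / 2"
    unfolding eventually_nhds_metric by auto
  have main: "ln d + \<theta> * (cK K i - \<epsilon> / 2) \<le> ln (Beta (\<theta> / real K + 1) (real (K - 1 - i) * \<theta> / real K))"
    if th: "\<theta> > 0" for \<theta>
  proof -
    have bp: "0 < real (K - 1 - i) * \<theta> / real K" using i th by auto
    have ap: "0 < \<theta> / real K + 1" using th K by (intro add_pos_pos divide_pos_pos) auto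
    have Bp: "0 < Beta (\<theta> / real K + 1) (real (K - 1 - i) * \<theta> / real K)" by (rule Beta_pos[OF ap bp])
    have pw: "indicator {p0 - d/2..p0 + d/2} x * exp (\<theta> * (cK K i - \<epsilon> / 2))
        \<le> indicator {0<..<1} x * (x powr (\<theta> / real K) * (1 - x) powr (real (K - 1 - i) * \<theta> / real K - 1))"
      for x :: real
    proof (cases "x \<in> {p0 - d/2..p0 + d/2}")
      case True
      then have "dist x p0 < d" using d by (auto simp: dist_real_def)
      note xp = dP[OF this]
      have "exp (\<theta> * (cK K i - \<epsilon> / 2)) \<le> exp (- \<theta> * (RK K i x - cK K i))"
        using xp th by (simp add: algebra_simps)
      also have "\<dots> \<le> x powr (\<theta> / real K) * (1 - x) powr (real (K - 1 - i) * \<theta> / real K - 1)"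
        using xp th by (intro phi_lower) auto
      finally have F: "exp (\<theta> * (cK K i - \<epsilon> / 2)) \<le> x powr (\<theta> / real K) * (1 - x) powr (real (K - 1 - i) * \<theta> / real K - 1)" .
      have i1: "indicator {p0 - d/2..p0 + d/2} x = (1::real)" using True by simp
      have i2: "indicator {0<..<1} x = (1::real)" using xp by simp
      show ?thesis unfolding i1 i2 using F by (simp only: mult_1)
    next
      case False
      then have i0: "indicator {p0 - d/2..p0 + d/2} x = (0::real)" by simp
      show ?thesis unfolding i0 by (auto simp: indicator_def intro!: mult_nonneg_nonneg)
    qed
    have "ennreal (d * exp (\<theta> * (cK K i - \<epsilon> / 2))) = (\<integral>\<^sup>+ x. ennreal (indicator {p0 - d/2..p0 + d/2} x * exp (\<theta> * (cK K i - \<epsilon> / 2))) \<partial>lborel)"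
      using d by (subst int_const_ind) (auto simp: ennreal_mult' mult.commute)
    also have "\<dots> \<le> (\<integral>\<^sup>+ x. ennreal (indicator {0<..<1} x * (x powr (\<theta> / real K) * (1 - x) powr (real (K - 1 - i) * \<theta> / real K - 1))) \<partial>lborel)"
      by (intro nn_integral_mono ennreal_leI pw)
    also have "\<dots> = ennreal (Beta (\<theta> / real K + 1) (real (K - 1 - i) * \<theta> / real K))"
      using Beta_int[OF ap bp] by simp
    finally have "d * exp (\<theta> * (cK K i - \<epsilon> / 2)) \<le> Beta (\<theta> / real K + 1) (real (K - 1 - i) * \<theta> / real K)"
      using Bp by (subst (asm) ennreal_le_iff) auto
    then have "ln (d * exp (\<theta> * (cK K i - \<epsilon> / 2))) \<le> ln (Beta (\<theta> / real K + 1) (real (K - 1 - i) * \<theta> / real K))"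
      using d Bp by (subst ln_le_cancel_iff) auto
    then show ?thesis using d by (simp add: ln_mult)
  qed
  have "eventually (\<lambda>\<theta>. \<theta> \<ge> max 1 (2 * \<bar>ln d\<bar> / \<epsilon>)) at_top" by (rule eventually_ge_at_top)
  then show ?thesis
  proof eventually_elim
    case (elim \<theta>)
    then have th: "\<theta> > 0" by auto
    have "2 * \<bar>ln d\<bar> / \<epsilon> \<le> \<theta>" using elim by auto
    then have "2 * \<bar>ln d\<bar> \<le> \<theta> * \<epsilon>" using e by (simp add: field_simps)
    then have "\<theta> * (cK K i - \<epsilon>) \<le> ln d + \<theta> * (cK K i - \<epsilon> / 2)" by (simp add: algebra_simps)
    then show ?case using main[OF th] by linarith
  qed
qed

definition Mp :: "nat \<Rightarrow> real \<Rightarrow> nat \<Rightarrow> real measure" where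
  "Mp K \<theta> j = beta_measure (\<theta> / real K + 1) (real (max 1 (K - 1 - j)) * \<theta> / real K)"

lemma prod_mono_ennreal: "(\<And>i. i \<in> A \<Longrightarrow> f i \<le> g i) \<Longrightarrow> prod (f :: 'a \<Rightarrow> ennreal) A \<le> prod g A"
proof (induction A rule: infinite_finite_induct)
  case (insert x F)
  have "f x * prod f F \<le> g x * prod g F"
    by (rule mult_mono) (use insert in auto)
  then show ?case using insert by simp
qed simp_all

lemma Mp_prob: "0 < \<theta> \<Longrightarrow> 0 < K \<Longrightarrow> prob_space (Mp K \<theta> j)"
  unfolding Mp_def by (intro beta_prob) (auto intro!: add_pos_pos divide_pos_pos mult_pos_pos)

lemma Mp_pps: "0 < \<theta> \<Longrightarrow> 0 < K \<Longrightarrow> product_prob_space (Mp K \<theta>)"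
proof -
  assume a: "0 < \<theta>" "0 < K"
  have p: "prob_space (Mp K \<theta> j)" for j using Mp_prob[OF a] .
  have s: "sigma_finite_measure (Mp K \<theta> j)" for j using p[of j] by (rule prob_space_imp_sigma_finite)
  show ?thesis
    unfolding product_prob_space_def product_prob_space_axioms_def product_sigma_finite_def
    using p s by blast
qed

lemma law_alt: "law_Y K \<theta> = distr (PiM {..<K-1} (Mp K \<theta>)) (PiM {..<K-1} (\<lambda>_. borel)) (stick_break K)"
  unfolding law_Y_def
  by (intro arg_cong3[where f=distr] refl PiM_cong) (auto simp: Mp_def max_def)

lemma sets_Mp[simp]: "sets (Mp K \<theta> j) = sets borel" by (simp add: Mp_def)
lemma space_Mp[simp]: "space (Mp K \<theta> j) = UNIV" by (simp add: Mp_def)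

lemma stick_meas: "stick_break K \<in> measurable (PiM {..<K-1} (Mp K \<theta>)) (PiM {..<K-1} (\<lambda>_. borel))"
proof -
  have c: "(\<lambda>v. v l) \<in> borel_measurable (PiM {..<K-1} (Mp K \<theta>))" if "l < K - 1" for l
  proof -
    have "(\<lambda>v. v l) \<in> measurable (PiM {..<K-1} (Mp K \<theta>)) (Mp K \<theta> l)"
      by (rule measurable_component_singleton) (use that in simp)
    then show ?thesis by (simp only: measurable_cong_sets[OF refl sets_Mp])
  qed
  show ?thesis
    unfolding stick_break_def
  proof (rule measurable_restrict)
    fix j assume j: "j \<in> {..<K-1}"
    have d: "(\<lambda>v. 1 - v l) \<in> borel_measurable (PiM {..<K-1} (Mp K \<theta>))" if "l < j" for l
      using c[of l] that j by (intro borel_measurable_diff borel_measurable_const) auto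
    have p: "(\<lambda>v. \<Prod>l<j. 1 - v l) \<in> borel_measurable (PiM {..<K-1} (Mp K \<theta>))"
      by (rule borel_measurable_prod) (use d in auto)
    show "(\<lambda>v. (\<Prod>l<j. 1 - v l) * v j) \<in> measurable (PiM {..<K-1} (Mp K \<theta>)) borel"
      by (rule borel_measurable_times[OF p c]) (use j in auto)
  qed
qed

lemma law_prob: "0 < \<theta> \<Longrightarrow> 0 < K \<Longrightarrow> prob_space (law_Y K \<theta>)"
proof -
  assume a: "0 < \<theta>" "0 < K"
  have "prob_space (PiM {..<K-1} (Mp K \<theta>))" by (rule prob_space_PiM) (rule Mp_prob[OF a])
  then show ?thesis unfolding law_alt by (rule prob_space.prob_space_distr[OF _ stick_meas])
qed

lemma RK_meas[measurable]: "RK K i \<in> borel_measurable borel"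
  unfolding RK_def by measurable

lemma Mp_eq: "i < K - 1 \<Longrightarrow> Mp K \<theta> i = beta_measure (\<theta> / real K + 1) (real (K - 1 - i) * \<theta> / real K)"
proof -
  assume "i < K - 1"
  then have "max 1 (K - 1 - i) = K - 1 - i" by simp
  then show ?thesis by (simp only: Mp_def)
qed

lemma ennreal_mono_mult: "x \<le> y \<Longrightarrow> (c::ennreal) * x \<le> c * y"
  by (rule mult_left_mono) (simp_all add: zero_le)

lemma bd_in:
  assumes "0 < x" "x < 1"
  shows "beta_density (\<theta> / real K + 1) b x = x powr (\<theta> / real K) * (1 - x) powr (b - 1) / Beta (\<theta> / real K + 1) b"
  using assms by (simp add: beta_density_alt)

lemma bd_out: "\<not> (0 < x \<and> x < 1) \<Longrightarrow> beta_density a b x = 0"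
  by (auto simp: beta_density_alt)

lemma upper_meas:
  assumes K: "K \<ge> 2" and th: "real K < \<theta>"
    and Ft: "\<And>v. (\<And>i. i < K - 1 \<Longrightarrow> 0 < v i \<and> v i < 1) \<Longrightarrow> stick_break K v \<in> F \<Longrightarrow>
               t < (\<Sum>i<K-1. RK K i (v i) - cK K i)"
  shows "measure (law_Y K \<theta>) F \<le> exp (- (\<theta> - real K) * t) *
           (\<Prod>i<K-1. 1 / Beta (\<theta> / real K + 1) (real (K - 1 - i) * \<theta> / real K))"
proof -
  have K0: "0 < K" using K by auto
  have tp: "0 < \<theta>" using th by linarith
  let ?B = "\<lambda>i. Beta (\<theta> / real K + 1) (real (K - 1 - i) * \<theta> / real K)"
  have Bp: "0 < ?B i" if "i < K - 1" for i
    using that tp by (intro Beta_pos add_pos_pos divide_pos_pos mult_pos_pos) auto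
  have rhs_nn: "0 \<le> exp (- (\<theta> - real K) * t) * (\<Prod>i<K-1. 1 / ?B i)"
    using Bp by (intro mult_nonneg_nonneg prod_nonneg) (auto intro: less_imp_le)
  interpret P: product_prob_space "Mp K \<theta>" by (rule Mp_pps[OF tp K0])
  interpret L: prob_space "law_Y K \<theta>" by (rule law_prob[OF tp K0])
  show ?thesis
  proof (cases "F \<in> sets (PiM {..<K-1} (\<lambda>_. borel))")
    case False
    then have "F \<notin> sets (law_Y K \<theta>)" by (simp add: law_alt)
    then show ?thesis using rhs_nn by (simp add: measure_notin_sets)
  next
    case True
    define h where "h i x = (if 0 < x \<and> x < 1 then ennreal (exp ((\<theta> - real K) * (RK K i x - cK K i))) else \<top>)" for i x
    define e where "e = exp (- (\<theta> - real K) * t)"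
    have e: "0 < e" by (simp add: e_def)
    have hm: "h i \<in> borel_measurable (Mp K \<theta> i)" for i
      unfolding h_def by (simp add: measurable_cong_sets[OF sets_Mp refl]) 
    let ?A = "stick_break K -` F \<inter> space (PiM {..<K-1} (Mp K \<theta>))"
    have Am: "?A \<in> sets (PiM {..<K-1} (Mp K \<theta>))"
      using True stick_meas by (rule measurable_sets[rotated])
    have "emeasure (law_Y K \<theta>) F = emeasure (PiM {..<K-1} (Mp K \<theta>)) ?A"
      unfolding law_alt using True by (intro emeasure_distr stick_meas)
    also have "\<dots> = (\<integral>\<^sup>+ v. indicator ?A v \<partial>PiM {..<K-1} (Mp K \<theta>))"
      using Am by simp
    also have "\<dots> \<le> (\<integral>\<^sup>+ v. ennreal e * (\<Prod>i<K-1. h i (v i)) \<partial>PiM {..<K-1} (Mp K \<theta>))"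
    proof (intro nn_integral_mono)
      fix v assume v: "v \<in> space (PiM {..<K-1} (Mp K \<theta>))"
      show "indicator ?A v \<le> ennreal e * (\<Prod>i<K-1. h i (v i))"
      proof (cases "v \<in> ?A")
        case False then show ?thesis by simp
      next
        case vA: True
        show ?thesis
        proof (cases "\<forall>i<K-1. 0 < v i \<and> v i < 1")
          case allin: True
          have "(\<Prod>i<K-1. h i (v i)) = (\<Prod>i<K-1. ennreal (exp ((\<theta> - real K) * (RK K i (v i) - cK K i))))"
            using allin by (intro prod.cong) (auto simp: h_def)
          also have "\<dots> = ennreal (\<Prod>i<K-1. exp ((\<theta> - real K) * (RK K i (v i) - cK K i)))"
            by (rule prod_ennreal) auto
          also have "(\<Prod>i<K-1. exp ((\<theta> - real K) * (RK K i (v i) - cK K i)))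
              = exp ((\<theta> - real K) * (\<Sum>i<K-1. RK K i (v i) - cK K i))"
            by (simp add: exp_sum sum_distrib_left)
          finally have pe: "(\<Prod>i<K-1. h i (v i)) = ennreal (exp ((\<theta> - real K) * (\<Sum>i<K-1. RK K i (v i) - cK K i)))" .
          have tlt: "t < (\<Sum>i<K-1. RK K i (v i) - cK K i)"
            using Ft[of v] allin vA by auto
          have "1 \<le> e * exp ((\<theta> - real K) * (\<Sum>i<K-1. RK K i (v i) - cK K i))"
          proof -
            have "0 \<le> (\<theta> - real K) * ((\<Sum>i<K-1. RK K i (v i) - cK K i) - t)"
              using th tlt by (intro mult_nonneg_nonneg) auto
            then have "0 \<le> - (\<theta> - real K) * t + (\<theta> - real K) * (\<Sum>i<K-1. RK K i (v i) - cK K i)"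
              by (simp add: algebra_simps)
            then show ?thesis unfolding e_def by (simp add: exp_add[symmetric])
          qed
          then show ?thesis unfolding pe using vA e
            by (simp add: ennreal_mult'[symmetric] ennreal_1[symmetric] del: ennreal_1)
        next
          case False
          then obtain i where i: "i < K - 1" "\<not> (0 < v i \<and> v i < 1)" by auto
          have "(\<Prod>i<K-1. h i (v i)) = \<top>"
            unfolding ennreal_prod_eq_top using i by (auto simp: h_def)
          then show ?thesis using e by (simp add: ennreal_mult_top)
        qed
      qed
    qed
    also have "\<dots> = ennreal e * (\<integral>\<^sup>+ v. (\<Prod>i<K-1. h i (v i)) \<partial>PiM {..<K-1} (Mp K \<theta>))"
      by (rule nn_integral_cmult) (use hm in measurable)
    also have "(\<integral>\<^sup>+ v. (\<Prod>i<K-1. h i (v i)) \<partial>PiM {..<K-1} (Mp K \<theta>)) = (\<Prod>i<K-1. integral\<^sup>N (Mp K \<theta> i) (h i))"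
      by (rule P.product_nn_integral_prod) (auto simp: hm)
    also have "\<dots> \<le> (\<Prod>i<K-1. ennreal (1 / ?B i))"
    proof (rule prod_mono_ennreal)
      fix i assume "i \<in> {..<K-1}"
      then have i: "i < K - 1" by simp
      have "integral\<^sup>N (Mp K \<theta> i) (h i) = (\<integral>\<^sup>+ x. ennreal (beta_density (\<theta> / real K + 1) (real (K - 1 - i) * \<theta> / real K) x) * h i x \<partial>lborel)"
        unfolding Mp_eq[OF i] beta_measure_def
        by (rule nn_integral_density) (use hm[of i] in \<open>auto simp: measurable_cong_sets[OF sets_Mp refl]\<close>)
      also have "\<dots> \<le> (\<integral>\<^sup>+ x. ennreal (indicator {0<..<1::real} x * (1 / ?B i)) \<partial>lborel)"
      proof (intro nn_integral_mono)
        fix x :: real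
        show "ennreal (beta_density (\<theta> / real K + 1) (real (K - 1 - i) * \<theta> / real K) x) * h i x
            \<le> ennreal (indicator {0<..<1::real} x * (1 / ?B i))"
        proof (cases "0 < x \<and> x < 1")
          case True
          have pu: "x powr (\<theta> / real K) * (1 - x) powr (real (K - 1 - i) * \<theta> / real K - 1) * exp ((\<theta> - real K) * (RK K i x - cK K i)) \<le> 1"
            using True i by (intro phi_upper) auto
          have "x powr (\<theta> / real K) * (1 - x) powr (real (K - 1 - i) * \<theta> / real K - 1) / ?B i * exp ((\<theta> - real K) * (RK K i x - cK K i)) \<le> 1 / ?B i"
            using pu Bp[OF i] by (simp add: field_simps)
          then show ?thesis
            using True Bp[OF i] unfolding h_def bd_in[OF conjunct1[OF True] conjunct2[OF True]]
            by (simp add: ennreal_mult'[symmetric] indicator_def)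
        next
          case False
          then show ?thesis by (simp add: bd_out h_def)
        qed
      qed
      also have "\<dots> = ennreal (1 / ?B i)"
        using Bp[OF i] by (subst int_const_ind') auto
      finally show "integral\<^sup>N (Mp K \<theta> i) (h i) \<le> ennreal (1 / ?B i)" .
    qed
    also have "(\<Prod>i<K-1. ennreal (1 / ?B i)) = ennreal (\<Prod>i<K-1. 1 / ?B i)"
      using Bp by (intro prod_ennreal) (auto intro: less_imp_le)
    finally have "emeasure (law_Y K \<theta>) F \<le> ennreal e * ennreal (\<Prod>i<K-1. 1 / ?B i)"
      using ennreal_mono_mult by blast
    also have "\<dots> = ennreal (e * (\<Prod>i<K-1. 1 / ?B i))"
      using e by (simp add: ennreal_mult')
    finally show ?thesis
      using rhs_nn unfolding e_def L.emeasure_eq_measure by (simp add: ennreal_le_iff)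
  qed
qed

lemma lower_meas:
  assumes K: "K \<ge> 2" and tp: "0 < \<theta>" and Gm: "G \<in> sets (PiM {..<K-1} (\<lambda>_. borel))" and d: "0 < \<delta>"
    and box: "\<And>w. w \<in> PiE {..<K-1} (\<lambda>i. {v i - \<delta><..<v i + \<delta>}) \<Longrightarrow> stick_break K w \<in> G"
    and int: "\<And>i x. i < K - 1 \<Longrightarrow> x \<in> {v i - \<delta><..<v i + \<delta>} \<Longrightarrow> 0 < x \<and> x < 1 \<and> RK K i x \<le> \<rho> i"
  shows "(\<Prod>i<K-1. 2 * \<delta> * exp (- \<theta> * (\<rho> i - cK K i)) / Beta (\<theta> / real K + 1) (real (K - 1 - i) * \<theta> / real K))
     \<le> measure (law_Y K \<theta>) G"
proof -
  have K0: "0 < K" using K by auto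
  let ?B = "\<lambda>i. Beta (\<theta> / real K + 1) (real (K - 1 - i) * \<theta> / real K)"
  let ?q = "\<lambda>i. 2 * \<delta> * exp (- \<theta> * (\<rho> i - cK K i)) / ?B i"
  have Bp: "0 < ?B i" if "i < K - 1" for i
    using that tp by (intro Beta_pos add_pos_pos divide_pos_pos mult_pos_pos) auto
  interpret P: product_prob_space "Mp K \<theta>" by (rule Mp_pps[OF tp K0])
  interpret L: prob_space "law_Y K \<theta>" by (rule law_prob[OF tp K0])
  let ?Bx = "PiE {..<K-1} (\<lambda>i. {v i - \<delta><..<v i + \<delta>})"
  have sub: "?Bx \<subseteq> stick_break K -` G \<inter> space (PiM {..<K-1} (Mp K \<theta>))"
    using box by (auto simp: space_PiM PiE_iff)
  have Am: "stick_break K -` G \<inter> space (PiM {..<K-1} (Mp K \<theta>)) \<in> sets (PiM {..<K-1} (Mp K \<theta>))"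
    using Gm stick_meas by (rule measurable_sets[rotated])
  have q: "ennreal (?q i) \<le> emeasure (Mp K \<theta> i) {v i - \<delta><..<v i + \<delta>}" if i: "i < K - 1" for i
  proof -
    have "ennreal (?q i) = (\<integral>\<^sup>+ x. ennreal (indicator {v i - \<delta><..<v i + \<delta>} x * (exp (- \<theta> * (\<rho> i - cK K i)) / ?B i)) \<partial>lborel)"
      using d Bp[OF i] by (subst int_const_ind') (auto simp: ennreal_mult'[symmetric] field_simps)
    also have "\<dots> \<le> (\<integral>\<^sup>+ x. ennreal (beta_density (\<theta> / real K + 1) (real (K - 1 - i) * \<theta> / real K) x) * indicator {v i - \<delta><..<v i + \<delta>} x \<partial>lborel)"
    proof (intro nn_integral_mono)
      fix x :: real
      show "ennreal (indicator {v i - \<delta><..<v i + \<delta>} x * (exp (- \<theta> * (\<rho> i - cK K i)) / ?B i))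
          \<le> ennreal (beta_density (\<theta> / real K + 1) (real (K - 1 - i) * \<theta> / real K) x) * indicator {v i - \<delta><..<v i + \<delta>} x"
      proof (cases "x \<in> {v i - \<delta><..<v i + \<delta>}")
        case True
        note xi = int[OF i True]
        have "exp (- \<theta> * (\<rho> i - cK K i)) \<le> exp (- \<theta> * (RK K i x - cK K i))"
          using xi tp by (simp add: mult_left_mono)
        also have "\<dots> \<le> x powr (\<theta> / real K) * (1 - x) powr (real (K - 1 - i) * \<theta> / real K - 1)"
          using xi tp by (intro phi_lower) auto
        finally have "exp (- \<theta> * (\<rho> i - cK K i)) / ?B i \<le> x powr (\<theta> / real K) * (1 - x) powr (real (K - 1 - i) * \<theta> / real K - 1) / ?B i"
          using Bp[OF i] by (intro divide_right_mono) auto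
        then show ?thesis using True xi unfolding bd_in[OF conjunct1[OF xi] conjunct1[OF conjunct2[OF xi]]]
          by (simp add: indicator_def ennreal_leI)
      next
        case False
        then show ?thesis by simp
      qed
    qed
    also have "\<dots> = emeasure (Mp K \<theta> i) {v i - \<delta><..<v i + \<delta>}"
      unfolding Mp_eq[OF i] beta_measure_def by (subst emeasure_density) auto
    finally show ?thesis .
  qed
  have "ennreal (\<Prod>i<K-1. ?q i) = (\<Prod>i<K-1. ennreal (?q i))"
    using Bp d by (intro prod_ennreal[symmetric]) (auto intro!: divide_nonneg_pos)
  also have "\<dots> \<le> (\<Prod>i<K-1. emeasure (Mp K \<theta> i) {v i - \<delta><..<v i + \<delta>})"
    using q by (intro prod_mono_ennreal) auto
  also have "\<dots> = emeasure (PiM {..<K-1} (Mp K \<theta>)) ?Bx"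
    by (rule P.emeasure_PiM[symmetric]) auto
  also have "\<dots> \<le> emeasure (PiM {..<K-1} (Mp K \<theta>)) (stick_break K -` G \<inter> space (PiM {..<K-1} (Mp K \<theta>)))"
    using sub Am by (intro emeasure_mono) auto
  also have "\<dots> = emeasure (law_Y K \<theta>) G"
    unfolding law_alt using Gm by (intro emeasure_distr[symmetric] stick_meas)
  finally show ?thesis unfolding L.emeasure_eq_measure by (simp add: ennreal_le_iff)
qed

lemma level_closed: "closedin (top_of_set (Delta_simplex K)) {x \<in> Delta_simplex K. rate_S K x \<le> c}"
proof -
  let ?L = "{x \<in> Delta_simplex K. rate_S K x \<le> c}"
  have "open (- ?L)"
  proof (rule open_eventually)
    fix y assume "y \<in> - ?L"
    show "eventually (\<lambda>z. z \<in> - ?L) (nhds y)"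
    proof (cases "y \<in> Delta_simplex K")
      case False
      have "open (- Delta_simplex K)" using closed_X by (simp add: closed_def)
      then have "eventually (\<lambda>z. z \<in> - Delta_simplex K) (nhds y)"
        using False by (intro eventually_nhds_in_open) auto
      then show ?thesis by eventually_elim auto
    next
      case True
      then have "c < rate_S K y" using \<open>y \<in> - ?L\<close> by auto
      then obtain r where r: "c < ereal r" "ereal r < rate_S K y" using ereal_dense2 by blast
      have "eventually (\<lambda>z. z \<in> Delta_simplex K \<longrightarrow> ereal r < rate_S K z) (nhds y)"
        by (rule lsc_rate[OF True r(2)])
      then show ?thesis
        by eventually_elim (use r(1) in \<open>auto simp: not_le intro: less_trans\<close>)
    qed
  qed
  then have "closed ?L" by (simp add: closed_def)
  then show ?thesis by (intro closed_subset) auto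
qed

lemma id_meas: "(\<lambda>x. x) \<in> measurable (PiM {..<(n::nat)} (\<lambda>_. borel :: real measure)) (PiM UNIV (\<lambda>_. borel :: real measure))"
proof -
  have "(\<lambda>\<omega> i. \<omega> i) \<in> measurable (PiM {..<n} (\<lambda>_. borel :: real measure)) (PiM UNIV (\<lambda>_. borel :: real measure))"
  proof (rule measurable_PiM_single')
    fix i :: nat
    show "(\<lambda>\<omega>. \<omega> i) \<in> measurable (PiM {..<n} (\<lambda>_. borel :: real measure)) (borel :: real measure)"
    proof (cases "i < n")
      case True
      then show ?thesis by (intro measurable_component_singleton) auto
    next
      case False
      have "(\<lambda>\<omega>. (undefined :: real)) \<in> measurable (PiM {..<n} (\<lambda>_. borel :: real measure)) (borel :: real measure)" by simp
      moreover have u: "\<And>\<omega>. \<omega> \<in> space (PiM {..<n} (\<lambda>_. borel :: real measure)) \<Longrightarrow> \<omega> i = undefined"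
        using False by (auto simp: space_PiM PiE_def extensional_def)
      ultimately show ?thesis
        using measurable_cong[of "PiM {..<n} (\<lambda>_. borel :: real measure)" "\<lambda>\<omega>. \<omega> i" "\<lambda>\<omega>. undefined" "borel :: real measure"]
        by simp
    qed
  qed (auto simp: space_PiM)
  then show ?thesis by simp
qed

lemma sets_of_borel:
  assumes "S \<in> sets (borel :: (nat \<Rightarrow> real) measure)" "S \<subseteq> extensional {..<(n::nat)}"
  shows "S \<in> sets (PiM {..<n} (\<lambda>_. borel :: real measure))"
proof -
  have S: "S \<in> sets (PiM UNIV (\<lambda>_. borel :: real measure))" using assms(1) by (simp add: sets_PiM_equal_borel)
  have "(\<lambda>x. x) -` S \<inter> space (PiM {..<n} (\<lambda>_. borel :: real measure)) \<in> sets (PiM {..<n} (\<lambda>_. borel :: real measure))"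
    by (rule measurable_sets[OF id_meas S])
  moreover have "(\<lambda>x. x) -` S \<inter> space (PiM {..<n} (\<lambda>_. borel :: real measure)) = S"
    using assms(2) by (auto simp: space_PiM PiE_def)
  ultimately show ?thesis by simp
qed

lemma open_meas:
  assumes "openin (top_of_set (Delta_simplex K)) G"
  shows "G \<in> sets (PiM {..<K-1} (\<lambda>_. borel :: real measure))"
proof -
  obtain U where U: "open U" "G = Delta_simplex K \<inter> U" using assms by (auto simp: openin_open)
  have "G \<in> sets borel" unfolding U(2) using closed_X U(1) by (intro sets.Int borel_closed borel_open)
  moreover have "G \<subseteq> extensional {..<K-1}" using U(2) by (auto simp: Delta_simplex_def)
  ultimately show ?thesis by (rule sets_of_borel)
qed

lemma box_nhds:
  assumes "eventually P (nhds (v :: nat \<Rightarrow> real))"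
  shows "\<exists>r>0. \<forall>w. (\<forall>i. \<bar>w i - v i\<bar> < r) \<longrightarrow> P w"
proof -
  obtain S where S: "open S" "v \<in> S" "\<And>w. w \<in> S \<Longrightarrow> P w" using assms unfolding eventually_nhds by auto
  have "openin (product_topology (\<lambda>i. euclidean) UNIV) S" using S(1) by (simp add: open_fun_def)
  from product_topology_open_contains_basis[OF this S(2)]
  obtain X where X: "v \<in> PiE UNIV X" "\<And>i. openin euclidean (X i)" "finite {i. X i \<noteq> topspace euclidean}"
    "PiE UNIV X \<subseteq> S" by auto
  define J where "J = {i. X i \<noteq> UNIV}"
  have J: "finite J" using X(3) by (simp add: J_def)
  have "\<forall>i\<in>J. \<exists>e>0. ball (v i) e \<subseteq> X i"
  proof
    fix i assume "i \<in> J"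
    have "open (X i)" using X(2)[of i] by simp
    moreover have "v i \<in> X i" using X(1) by (auto simp: PiE_def)
    ultimately show "\<exists>e>0. ball (v i) e \<subseteq> X i" by (rule openE) auto
  qed
  then obtain R where R: "\<And>i. i \<in> J \<Longrightarrow> R i > 0 \<and> ball (v i) (R i) \<subseteq> X i" by metis
  define r where "r = Min (insert 1 (R ` J))"
  have r: "r > 0" unfolding r_def using J R by (subst Min_gr_iff) auto
  have rR: "r \<le> R i" if "i \<in> J" for i unfolding r_def using J that by (intro Min_le) auto
  show ?thesis
  proof (intro exI[of _ r] conjI allI impI r)
    fix w assume w: "\<forall>i. \<bar>w i - v i\<bar> < r"
    have "w \<in> PiE UNIV X"
    proof (unfold PiE_def, intro IntI)
      show "w \<in> Pi UNIV X"
      proof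
        fix i :: nat
        show "w i \<in> X i"
        proof (cases "i \<in> J")
          case True
          then have "w i \<in> ball (v i) (R i)" using w[rule_format, of i] rR[OF True] by (auto simp: dist_real_def)
          then show ?thesis using R[OF True] by auto
        next
          case False then show ?thesis by (simp add: J_def)
        qed
      qed
    qed auto
    then show "P w" using X(4) S(3) by auto
  qed
qed

lemma stick_tendsto: "(stick_break K \<longlongrightarrow> stick_break K v) (nhds v)"
proof -
  have "continuous_on UNIV (stick_break K)"
  proof (rule continuous_on_coordinatewise_then_product)
    fix j
    show "continuous_on UNIV (\<lambda>w. stick_break K w j)"
    proof (cases "j < K - 1")
      case True
      then show ?thesis unfolding stick_break_def by (simp add: continuous_intros)
    next
      case False
      then show ?thesis unfolding stick_break_def by simp
    qed
  qed
  then have "(stick_break K \<longlongrightarrow> stick_break K v) (at v)" by (simp add: continuous_on_def)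
  then show ?thesis using tendsto_at_iff_tendsto_nhds[of "stick_break K" v] by simp
qed

lemma RK_coord_ev:
  assumes "0 < v i" "v i < 1" "0 < e"
  shows "eventually (\<lambda>w. 0 < w i \<and> w i < 1 \<and> RK K i (w i) < RK K i (v i) + e) (nhds (v :: nat \<Rightarrow> real))"
proof -
  have c: "isCont (RK K i) (v i)"
    using RK_tendsto[OF assms(1,2), of K i] tendsto_at_iff_tendsto_nhds[of "RK K i" "v i"]
    by (simp add: isCont_def)
  have t: "((\<lambda>w. RK K i (w i)) \<longlongrightarrow> RK K i (v i)) (nhds v)"
    by (rule isCont_tendsto_compose[OF c coord_tendsto[of i v]])
  have a: "eventually (\<lambda>w. 0 < w i) (nhds v)" using assms by (intro order_tendstoD[OF coord_tendsto])
  have b: "eventually (\<lambda>w. w i < 1) (nhds v)" using assms by (intro order_tendstoD[OF coord_tendsto])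
  have d: "eventually (\<lambda>w. RK K i (w i) < RK K i (v i) + e) (nhds v)" using assms by (intro order_tendstoD[OF t]) auto
  show ?thesis using a b d by eventually_elim auto
qed

lemma log_prob_div:
  assumes "0 < \<theta>" "0 < m"
  shows "log_prob m / ereal \<theta> = ereal (ln m / \<theta>)"
  using assms by (simp add: log_prob_def)

lemma log_prob_zero_div:
  assumes "0 < \<theta>"
  shows "log_prob 0 / ereal \<theta> = - \<infinity>"
  using assms by (simp add: log_prob_def)

lemma ln_exp_prod:
  fixes f :: "'b \<Rightarrow> real"
  assumes "finite A" "\<And>i. i \<in> A \<Longrightarrow> 0 < f i"
  shows "ln (exp a * (\<Prod>i\<in>A. 1 / f i)) = a - (\<Sum>i\<in>A. ln (f i))"
proof -
  have P: "0 < (\<Prod>i\<in>A. 1 / f i)" using assms by (intro prod_pos) auto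
  have "ln (exp a * (\<Prod>i\<in>A. 1 / f i)) = a + ln (\<Prod>i\<in>A. 1 / f i)"
    using P by (simp add: ln_mult)
  also have "ln (\<Prod>i\<in>A. 1 / f i) = (\<Sum>i\<in>A. ln (1 / f i))"
  proof (rule ln_prod[OF assms(1)])
    fix i assume "i \<in> A"
    then have "0 < f i" by (rule assms(2))
    then show "1 / f i \<noteq> 0" by simp
  qed
  also have "\<dots> = (\<Sum>i\<in>A. - ln (f i))"
  proof (rule sum.cong)
    fix i assume "i \<in> A"
    then have "0 < f i" by (rule assms(2))
    then show "ln (1 / f i) = - ln (f i)" by (simp add: ln_div)
  qed simp
  finally show ?thesis by (simp add: sum_negf)
qed

lemma upper_ev:
  assumes K: "K \<ge> 2" and FX: "F \<subseteq> Delta_simplex K" and r: "ereal r < (INF x\<in>F. rate_S K x)" and e: "0 < \<epsilon>"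
  shows "eventually (\<lambda>\<theta>. log_prob (measure (law_Y K \<theta>) F) / ereal \<theta> \<le> ereal (- r + \<epsilon>)) at_top"
proof -
  define C where "C = (\<Sum>i<K-1. cK K i)"
  define t where "t = r - C"
  define e2 where "e2 = \<epsilon> / (2 * real K)"
  have K0: "real K > 0" using K by auto
  have e2: "e2 > 0" using e K0 by (simp add: e2_def)
  let ?B = "\<lambda>\<theta> i. Beta (\<theta> / real K + 1) (real (K - 1 - i) * \<theta> / real K)"
  have Ft: "t < (\<Sum>i<K-1. RK K i (v i) - cK K i)"
    if v: "\<And>i. i < K - 1 \<Longrightarrow> 0 < v i \<and> v i < 1" and sv: "stick_break K v \<in> F" for v
  proof -
    have "(INF x\<in>F. rate_S K x) \<le> rate_S K (stick_break K v)" using sv by (rule INF_lower)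
    moreover have eq: "rate_S K (stick_break K v) = ereal (\<Sum>i<K-1. RK K i (v i))"
      by (rule stick_props(3)) (rule v)
    ultimately have "ereal r < ereal (\<Sum>i<K-1. RK K i (v i))" using r by (metis less_le_trans)
    then show ?thesis by (simp add: t_def C_def sum_subtractf)
  qed
  have EB: "eventually (\<lambda>\<theta>. \<forall>i\<in>{..<K-1}. \<theta> * (cK K i - e2) \<le> ln (?B \<theta> i)) at_top"
    using Beta_lower e2 by (intro eventually_ball_finite) auto
  have E1: "eventually (\<lambda>\<theta>. max (real K + 1) (2 * real K * \<bar>t\<bar> / \<epsilon>) \<le> \<theta>) at_top"
    by (rule eventually_ge_at_top)
  show ?thesis using EB E1
  proof eventually_elim
    case (elim \<theta>)
    have th: "real K < \<theta>" "0 < \<theta>" using elim K0 by auto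
    have Bp: "0 < ?B \<theta> i" if "i < K - 1" for i
      using that th by (intro Beta_pos add_pos_pos divide_pos_pos mult_pos_pos) auto
    define m where "m = measure (law_Y K \<theta>) F"
    have mle: "m \<le> exp (- (\<theta> - real K) * t) * (\<Prod>i<K-1. 1 / ?B \<theta> i)"
      unfolding m_def using Ft by (intro upper_meas[OF K th(1)]) auto
    show ?case
    proof (cases "m = 0")
      case True
      then show ?thesis using th unfolding m_def by (simp add: log_prob_zero_div)
    next
      case False
      then have mp: "0 < m" unfolding m_def using measure_nonneg[of "law_Y K \<theta>" F] by linarith
      have "ln m \<le> ln (exp (- (\<theta> - real K) * t) * (\<Prod>i<K-1. 1 / ?B \<theta> i))"
        using mp mle by (subst ln_le_cancel_iff) auto
      also have "\<dots> = - (\<theta> - real K) * t - (\<Sum>i<K-1. ln (?B \<theta> i))"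
        by (rule ln_exp_prod) (use Bp in auto)
      finally have l0: "ln m \<le> - (\<theta> - real K) * t - (\<Sum>i<K-1. ln (?B \<theta> i))" .
      have "(\<Sum>i<K-1. \<theta> * (cK K i - e2)) \<le> (\<Sum>i<K-1. ln (?B \<theta> i))"
        using elim by (intro sum_mono) auto
      moreover have "(\<Sum>i<K-1. \<theta> * (cK K i - e2)) = \<theta> * C - \<theta> * real (K - 1) * e2"
        by (simp add: C_def sum_distrib_left[symmetric] sum_subtractf algebra_simps)
      ultimately have "ln m \<le> - (\<theta> - real K) * t - (\<theta> * C - \<theta> * real (K - 1) * e2)"
        using l0 by linarith
      then have l1: "ln m \<le> - \<theta> * r + real K * t + \<theta> * real (K - 1) * e2"
        by (simp add: t_def algebra_simps)
      have "\<theta> * real (K - 1) * e2 \<le> \<theta> * (\<epsilon> / 2)"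
      proof -
        have "real (K - 1) * e2 \<le> real K * e2" using e2 by (intro mult_right_mono) auto
        also have "\<dots> = \<epsilon> / 2" using K0 by (simp add: e2_def)
        finally show ?thesis using th by (simp add: mult.assoc mult_left_mono)
      qed
      moreover have "real K * t \<le> \<theta> * (\<epsilon> / 2)"
      proof -
        have "2 * real K * \<bar>t\<bar> / \<epsilon> \<le> \<theta>" using elim by auto
        then have "2 * real K * \<bar>t\<bar> \<le> \<theta> * \<epsilon>" using e by (simp add: field_simps)
        moreover have "real K * t \<le> real K * \<bar>t\<bar>" using K0 by (intro mult_left_mono) auto
        ultimately show ?thesis by linarith
      qed
      ultimately have "ln m \<le> \<theta> * (- r + \<epsilon>)" using l1 by (simp add: algebra_simps)
      then have "ln m / \<theta> \<le> - r + \<epsilon>" using th by (simp add: pos_divide_le_eq mult.commute)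
      then show ?thesis using th mp unfolding m_def[symmetric] by (simp add: log_prob_div)
    qed
  qed
qed

lemma lower_ev:
  assumes K: "K \<ge> 2" and G: "openin (top_of_set (Delta_simplex K)) G" and y: "y \<in> G"
    and I: "rate_S K y = ereal J" and e: "0 < \<epsilon>"
  shows "eventually (\<lambda>\<theta>. ereal (- J - \<epsilon>) \<le> log_prob (measure (law_Y K \<theta>) G) / ereal \<theta>) at_top"
proof -
  have K0: "real K > 0" using K by auto
  have yX: "y \<in> Delta_simplex K" using openin_imp_subset[OF G] y by auto
  have iy: "intr K y" using rate_not_intr[OF yX] I by auto
  define v where "v = restrict (\<lambda>i. y i / (1 - (\<Sum>l<i. y l))) {..<K-1}"
  have vi: "\<And>i. i < K - 1 \<Longrightarrow> 0 < v i \<and> v i < 1" using stick_inverse(1)[OF yX iy] unfolding v_def .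
  have sv: "stick_break K v = y" using stick_inverse(2)[OF yX iy] unfolding v_def .
  have vext: "v i = undefined" if "\<not> i < K - 1" for i using that by (simp add: v_def)
  have J: "J = (\<Sum>i<K-1. RK K i (v i))"
    using stick_props(3)[of K v] vi I sv by auto
  obtain U where U: "open U" "G = Delta_simplex K \<inter> U" using G by (auto simp: openin_open)
  have yU: "y \<in> U" using y U by auto
  define e2 where "e2 = \<epsilon> / (2 * real K)"
  have e2: "e2 > 0" using e K0 by (simp add: e2_def)
  have P1: "eventually (\<lambda>w. stick_break K w \<in> U) (nhds v)"
    using stick_tendsto[of K v] U(1) yU sv by (intro topological_tendstoD) auto
  have P2: "eventually (\<lambda>w. \<forall>i\<in>{..<K-1}. 0 < w i \<and> w i < 1 \<and> RK K i (w i) < RK K i (v i) + e2) (nhds v)"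
    using vi e2 by (intro eventually_ball_finite) (auto intro!: RK_coord_ev)
  obtain r where r: "r > 0" and rP: "\<And>w. (\<forall>i. \<bar>w i - v i\<bar> < r) \<Longrightarrow>
      stick_break K w \<in> U \<and> (\<forall>i\<in>{..<K-1}. 0 < w i \<and> w i < 1 \<and> RK K i (w i) < RK K i (v i) + e2)"
    using box_nhds[OF eventually_conj[OF P1 P2]] by blast
  have box: "stick_break K w \<in> G" if w: "w \<in> PiE {..<K-1} (\<lambda>i. {v i - r<..<v i + r})" for w
  proof -
    have "\<forall>i. \<bar>w i - v i\<bar> < r"
    proof
      fix i show "\<bar>w i - v i\<bar> < r"
      proof (cases "i < K - 1")
        case True
        then have "w i \<in> {v i - r<..<v i + r}" using w by (auto simp: PiE_def Pi_def)
        then show ?thesis by (auto simp: abs_less_iff)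
      next
        case False then show ?thesis using w r vext[OF False] by (auto simp: PiE_def extensional_def)
      qed
    qed
    note wP = rP[OF this]
    have "stick_break K w \<in> Delta_simplex K" using wP by (intro stick_props(1)) auto
    then show ?thesis using wP U(2) by auto
  qed
  have int: "0 < x \<and> x < 1 \<and> RK K i x \<le> RK K i (v i) + e2"
    if i: "i < K - 1" and x: "x \<in> {v i - r<..<v i + r}" for i x
  proof -
    have "\<forall>j. \<bar>(v(i := x)) j - v j\<bar> < r" using x r by (auto simp: abs_less_iff)
    then have "\<forall>j\<in>{..<K-1}. 0 < (v(i := x)) j \<and> (v(i := x)) j < 1 \<and> RK K j ((v(i := x)) j) < RK K j (v j) + e2"
      using rP by blast
    then have "0 < (v(i := x)) i \<and> (v(i := x)) i < 1 \<and> RK K i ((v(i := x)) i) < RK K i (v i) + e2"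
      using i by blast
    then show ?thesis by simp
  qed
  define C where "C = (\<Sum>i<K-1. cK K i)"
  define D where "D = real (K - 1) * ln (2 * r) + real K * C"
  have E1: "eventually (\<lambda>\<theta>. max (real K + 1) (2 * \<bar>D\<bar> / \<epsilon>) \<le> \<theta>) at_top"
    by (rule eventually_ge_at_top)
  show ?thesis using E1
  proof eventually_elim
    case (elim \<theta>)
    have th: "real K < \<theta>" "0 < \<theta>" using elim K0 by auto
    let ?B = "\<lambda>i. Beta (\<theta> / real K + 1) (real (K - 1 - i) * \<theta> / real K)"
    let ?q = "\<lambda>i. 2 * r * exp (- \<theta> * ((RK K i (v i) + e2) - cK K i)) / ?B i"
    have Bp: "0 < ?B i" if "i < K - 1" for i
      using that th by (intro Beta_pos add_pos_pos divide_pos_pos mult_pos_pos) auto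
    have qp: "0 < ?q i" if "i < K - 1" for i using Bp[OF that] r by simp
    define m where "m = measure (law_Y K \<theta>) G"
    have mge: "(\<Prod>i<K-1. ?q i) \<le> m"
      unfolding m_def by (rule lower_meas[OF K th(2) open_meas[OF G] r box int])
    have Pp: "0 < (\<Prod>i<K-1. ?q i)" using qp by (intro prod_pos) auto
    then have mp: "0 < m" using mge by linarith
    have "ln (\<Prod>i<K-1. ?q i) = (\<Sum>i<K-1. ln (?q i))"
    proof (rule ln_prod)
      fix i assume "i \<in> {..<K-1}"
      then have "0 < ?q i" using qp by simp
      then show "?q i \<noteq> 0" by linarith
    qed simp
    also have "\<dots> \<ge> (\<Sum>i<K-1. ln (2 * r) - \<theta> * (RK K i (v i) + e2) + real K * cK K i)"
    proof (rule sum_mono)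
      fix i assume "i \<in> {..<K-1}"
      then have i: "i < K - 1" by simp
      have lb: "ln (?B i) \<le> (\<theta> - real K) * cK K i"
      proof -
        have "ln (?B i) \<le> ln (exp ((\<theta> - real K) * cK K i))"
          using Beta_upper[OF i] th Bp[OF i] by (subst ln_le_cancel_iff) auto
        then show ?thesis by simp
      qed
      have "ln (?q i) = ln (2 * r) + (- \<theta> * ((RK K i (v i) + e2) - cK K i)) - ln (?B i)"
        using r Bp[OF i] by (simp add: ln_div ln_mult)
      then show "ln (2 * r) - \<theta> * (RK K i (v i) + e2) + real K * cK K i \<le> ln (?q i)"
        using lb by (simp add: algebra_simps)
    qed
    finally have "(\<Sum>i<K-1. ln (2 * r) - \<theta> * (RK K i (v i) + e2) + real K * cK K i) \<le> ln m"
      using mge Pp by (smt (verit) ln_le_cancel_iff)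
    moreover have "(\<Sum>i<K-1. ln (2 * r) - \<theta> * (RK K i (v i) + e2) + real K * cK K i)
        = D - \<theta> * J - \<theta> * real (K - 1) * e2"
      by (simp add: D_def C_def J sum.distrib sum_subtractf sum_distrib_left[symmetric] algebra_simps)
    ultimately have l1: "D - \<theta> * J - \<theta> * real (K - 1) * e2 \<le> ln m" by simp
    have "\<theta> * real (K - 1) * e2 \<le> \<theta> * (\<epsilon> / 2)"
    proof -
      have "real (K - 1) * e2 \<le> real K * e2" using e2 by (intro mult_right_mono) auto
      also have "\<dots> = \<epsilon> / 2" using K0 by (simp add: e2_def)
      finally show ?thesis using th by (simp add: mult.assoc mult_left_mono)
    qed
    moreover have "- D \<le> \<theta> * (\<epsilon> / 2)"
    proof -
      have "2 * \<bar>D\<bar> / \<epsilon> \<le> \<theta>" using elim by auto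
      then have "2 * \<bar>D\<bar> \<le> \<theta> * \<epsilon>" using e by (simp add: field_simps)
      then show ?thesis by linarith
    qed
    ultimately have "\<theta> * (- J - \<epsilon>) \<le> ln m" using l1 by (simp add: algebra_simps)
    then have "- J - \<epsilon> \<le> ln m / \<theta>" using th by (simp add: pos_le_divide_eq mult.commute)
    then show ?case using th mp unfolding m_def[symmetric] by (simp add: log_prob_div)
  qed
qed

lemma limsup_le_neg:
  fixes X :: ereal and f :: "real \<Rightarrow> ereal"
  assumes H: "\<And>r \<epsilon>. ereal r < X \<Longrightarrow> 0 < \<epsilon> \<Longrightarrow> eventually (\<lambda>\<theta>. f \<theta> \<le> ereal (- r + \<epsilon>)) at_top"
  shows "Limsup at_top f \<le> - X"
proof (rule ccontr)
  assume "\<not> Limsup at_top f \<le> - X"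
  then have "- X < Limsup at_top f" by simp
  then obtain q where q: "- X < ereal q" "ereal q < Limsup at_top f" using ereal_dense2 by blast
  then obtain q' where q': "- X < ereal q'" "ereal q' < ereal q" using ereal_dense2 by blast
  have "- ereal q' < X" using q'(1) ereal_uminus_less_reorder[of X "ereal q'"] by blast
  then have r: "ereal (- q') < X" by simp
  have e: "0 < q - q'" using q'(2) by simp
  have "eventually (\<lambda>\<theta>. f \<theta> \<le> ereal (- (- q') + (q - q'))) at_top" by (rule H[OF r e])
  then have "Limsup at_top f \<le> ereal q" by (intro Limsup_bounded) simp
  then show False using q(2) by simp
qed

lemma ereal_le_eps:
  fixes L :: ereal
  assumes H: "\<And>\<epsilon>. 0 < \<epsilon> \<Longrightarrow> ereal (a - \<epsilon>) \<le> L"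
  shows "ereal a \<le> L"
proof (rule ccontr)
  assume "\<not> ereal a \<le> L"
  then have "L < ereal a" by simp
  then obtain q where q: "L < ereal q" "ereal q < ereal a" using ereal_dense2 by blast
  have "ereal (a - (a - q)) \<le> L" using q(2) by (intro H) simp
  then show False using q(1) by simp
qed

theorem lemma2p4:
  fixes K :: nat
  assumes "K \<ge> 2"
  shows "LDP (Delta_simplex K) (law_Y K) (rate_S K)"
  unfolding LDP_def
proof (intro conjI allI impI ballI)
  fix x assume "x \<in> Delta_simplex K"
  then show "0 \<le> rate_S K x" by (rule rate_nonneg)
next
  fix c show "closedin (top_of_set (Delta_simplex K)) {x \<in> Delta_simplex K. rate_S K x \<le> c}"
    by (rule level_closed)
next
  fix F assume F: "closedin (top_of_set (Delta_simplex K)) F"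
  have FX: "F \<subseteq> Delta_simplex K" using closedin_imp_subset[OF F] by simp
  show "Limsup at_top (\<lambda>\<theta>. log_prob (measure (law_Y K \<theta>) F) / ereal \<theta>) \<le> - (INF x\<in>F. rate_S K x)"
    by (rule limsup_le_neg) (rule upper_ev[OF assms FX])
next
  fix G assume G: "openin (top_of_set (Delta_simplex K)) G"
  let ?L = "Liminf at_top (\<lambda>\<theta>. log_prob (measure (law_Y K \<theta>) G) / ereal \<theta>)"
  have "- ?L \<le> rate_S K y" if y: "y \<in> G" for y
  proof -
    have "- rate_S K y \<le> ?L"
    proof (cases "rate_S K y = \<infinity>")
      case True then show ?thesis by simp
    next
      case False
      have yX: "y \<in> Delta_simplex K" using openin_imp_subset[OF G] y by auto
      have "0 \<le> rate_S K y" by (rule rate_nonneg[OF yX])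
      then obtain J where J: "rate_S K y = ereal J" using False by (cases "rate_S K y") auto
      have "ereal (- J) \<le> ?L"
      proof (rule ereal_le_eps)
        fix \<epsilon> :: real assume e: "0 < \<epsilon>"
        show "ereal (- J - \<epsilon>) \<le> ?L"
          by (intro Liminf_bounded lower_ev[OF assms G y J e])
      qed
      then show ?thesis using J by simp
    qed
    then show ?thesis by (simp add: ereal_uminus_le_reorder)
  qed
  then have "- ?L \<le> (INF x\<in>G. rate_S K x)" by (rule INF_greatest)
  then show "- (INF x\<in>G. rate_S K x) \<le> ?L" by (simp add: ereal_uminus_le_reorder)
qed

end
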